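(* For all integers $m,k\ge 0$, the Wiener index of $P_{m,k}=J([m]\times[k])$ is \[ \d(P_{m,k})=\frac{mk}{4m+4k+2}\binom{2m+2k+2}{2k+1}. \]
   Context: For a finite poset $P$, $J(P)$ is the lattice of order ideals of $P$ ordered by inclusion; $[m]$ is the $m$-element chain and $[m]\times[k]$ has the componentwise order. For a finite poset $Q$, $\d(Q)=\sum_{(p,q)\in Q\times Q}\d(p,q)$, where $\d(p,q)$ is the graph distance between $p$ and $q$ in the Hasse diagram of $Q$ (edges = cover relations), and the sum is over ordered pairs. *)

theory Defs
  imports Complex_Main
begin

definition order_ideals :: "('a \<Rightarrow> 'a \<Rightarrow> bool) \<Rightarrow> 'a set \<Rightarrow> 'a set set" where
  "order_ideals le P = {I. I \<subseteq> P \<and> (\<forall>x\<in>I. \<forall>y\<in>P. le y x \<longrightarrow> y \<in> I)}"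

definition chain :: "nat \<Rightarrow> nat set" where
  "chain m = {1..m}"

definition prod_le :: "nat \<times> nat \<Rightarrow> nat \<times> nat \<Rightarrow> bool" where
  "prod_le p q \<longleftrightarrow> fst p \<le> fst q \<and> snd p \<le> snd q"

definition covers :: "'a set \<Rightarrow> ('a \<Rightarrow> 'a \<Rightarrow> bool) \<Rightarrow> 'a \<Rightarrow> 'a \<Rightarrow> bool" where
  "covers Q le x y \<longleftrightarrow> x \<in> Q \<and> y \<in> Q \<and> le x y \<and> x \<noteq> y \<and>
     \<not> (\<exists>z\<in>Q. le x z \<and> le z y \<and> z \<noteq> x \<and> z \<noteq> y)"

definition hasse_edges :: "'a set \<Rightarrow> ('a \<Rightarrow> 'a \<Rightarrow> bool) \<Rightarrow> ('a \<times> 'a) set" where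
  "hasse_edges Q le = {(x, y). covers Q le x y \<or> covers Q le y x}"

definition hasse_dist :: "'a set \<Rightarrow> ('a \<Rightarrow> 'a \<Rightarrow> bool) \<Rightarrow> 'a \<Rightarrow> 'a \<Rightarrow> nat" where
  "hasse_dist Q le x y = (LEAST n. (x, y) \<in> (hasse_edges Q le) ^^ n)"

definition wiener :: "'a set \<Rightarrow> ('a \<Rightarrow> 'a \<Rightarrow> bool) \<Rightarrow> nat" where
  "wiener Q le = (\<Sum>p\<in>Q. \<Sum>q\<in>Q. hasse_dist Q le p q)"

text \<open>P_{m,k} = J([m] x [k]), ordered by inclusion.\<close>
definition P_mk :: "nat \<Rightarrow> nat \<Rightarrow> (nat \<times> nat) set set" where
  "P_mk m k = order_ideals prod_le (chain m \<times> chain k)"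

end

theory Submission
  imports Defs "HOL-Computational_Algebra.Formal_Power_Series"
begin

unbundle fps_syntax


definition SS :: "nat \<Rightarrow> nat \<Rightarrow> nat set set" where
  "SS n a = {U. U \<subseteq> {1..n} \<and> card U = a}"

definition cnt :: "nat set \<Rightarrow> nat \<Rightarrow> nat" where
  "cnt U t = card {x\<in>U. x \<le> t}"

definition G :: "(nat \<Rightarrow> nat \<Rightarrow> real) \<Rightarrow> nat \<Rightarrow> nat \<Rightarrow> nat \<Rightarrow> real" where
  "G g n a b = (\<Sum>U\<in>SS n a. \<Sum>V\<in>SS n b. \<Sum>t\<le>n. g (cnt U t) (cnt V t))"

lemma finite_SS[simp]: "finite (SS n a)"
  unfolding SS_def by (rule finite_subset[of _ "Pow {1..n}"]) auto

lemma card_SS: "card (SS n a) = n choose a"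
  unfolding SS_def using n_subsets[of "{1..n}" a] by simp

lemma SS_0: "SS 0 a = (if a = 0 then {{}} else {})"
  unfolding SS_def by auto

lemma sum_SS_Suc:
  "(\<Sum>U\<in>SS (Suc n) a. h U) = (\<Sum>U\<in>SS n a. h U) +
     (if a = 0 then 0 else (\<Sum>U\<in>SS n (a-1). h (insert (Suc n) U)))"
proof -
  have eq: "SS (Suc n) a = SS n a \<union> {U\<in>SS (Suc n) a. Suc n \<in> U}"
    unfolding SS_def by (auto simp: atLeastAtMostSuc_conv)
  have disj: "SS n a \<inter> {U\<in>SS (Suc n) a. Suc n \<in> U} = {}"
    unfolding SS_def by auto
  have fin2: "finite {U\<in>SS (Suc n) a. Suc n \<in> U}" by simp
  have "(\<Sum>U\<in>SS (Suc n) a. h U) = (\<Sum>U\<in>SS n a. h U) + (\<Sum>U\<in>{U\<in>SS (Suc n) a. Suc n \<in> U}. h U)"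
    by (subst eq, rule sum.union_disjoint) (use disj in auto)
  moreover have "(\<Sum>U\<in>{U\<in>SS (Suc n) a. Suc n \<in> U}. h U) =
     (if a = 0 then 0 else (\<Sum>U\<in>SS n (a-1). h (insert (Suc n) U)))"
  proof (cases "a = 0")
    case True
    have e: "{U\<in>SS (Suc n) a. Suc n \<in> U} = {}" unfolding SS_def
      using True by auto (metis card_0_eq finite_atLeastAtMost finite_subset empty_iff)
    show ?thesis unfolding e using True by simp
  next
    case False
    have img: "{U\<in>SS (Suc n) a. Suc n \<in> U} = insert (Suc n) ` SS n (a-1)"
    proof
      show "{U \<in> SS (Suc n) a. Suc n \<in> U} \<subseteq> insert (Suc n) ` SS n (a - 1)"
      proof
        fix U assume U: "U \<in> {U \<in> SS (Suc n) a. Suc n \<in> U}"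
        then have sub: "U \<subseteq> {1..Suc n}" "card U = a" "Suc n \<in> U" unfolding SS_def by auto
        have fin: "finite U" using sub(1) finite_subset by blast
        have "U - {Suc n} \<in> SS n (a-1)" unfolding SS_def using sub fin
          by (auto simp: atLeastAtMostSuc_conv)
        moreover have "U = insert (Suc n) (U - {Suc n})" using sub by auto
        ultimately show "U \<in> insert (Suc n) ` SS n (a - 1)" by blast
      qed
    next
      show "insert (Suc n) ` SS n (a - 1) \<subseteq> {U \<in> SS (Suc n) a. Suc n \<in> U}"
      proof
        fix U assume "U \<in> insert (Suc n) ` SS n (a - 1)"
        then obtain W where W: "W \<in> SS n (a-1)" "U = insert (Suc n) W" by blast
        have fin: "finite W" using W(1) unfolding SS_def using finite_subset by blast
        have "Suc n \<notin> W" using W(1) unfolding SS_def by auto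
        then have "card U = a" using W fin False unfolding SS_def by auto
        then show "U \<in> {U \<in> SS (Suc n) a. Suc n \<in> U}" using W(1) W(2) unfolding SS_def by auto
      qed
    qed
    have inj: "inj_on (insert (Suc n)) (SS n (a-1))"
      unfolding inj_on_def SS_def by auto (metis insert_ident atLeastAtMost_iff not_less_eq_eq subsetD le_refl)+
    show ?thesis unfolding img sum.reindex[OF inj] using False by simp
  qed
  ultimately show ?thesis by simp
qed

lemma cnt_insert: "U \<subseteq> {1..n} \<Longrightarrow> t \<le> n \<Longrightarrow> cnt (insert (Suc n) U) t = cnt U t"
  unfolding cnt_def by (rule arg_cong[where f=card]) auto

lemma cnt_top: "U \<subseteq> {1..n} \<Longrightarrow> cnt U n = card U"
  unfolding cnt_def by (rule arg_cong[where f=card]) auto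

lemma cnt_empty[simp]: "cnt {} t = 0"
  unfolding cnt_def by simp

lemma G_0: "G g 0 a b = (if a = 0 \<and> b = 0 then g 0 0 else 0)"
  unfolding G_def SS_0 by simp

lemma G_Suc: "G g (Suc n) a b = G g n a b + (if a=0 then 0 else G g n (a-1) b)
   + (if b = 0 then 0 else G g n a (b-1)) + (if a=0 \<or> b=0 then 0 else G g n (a-1) (b-1))
   + g a b * real (Suc n choose a) * real (Suc n choose b)"
proof -
  define h where "h U V = (\<Sum>t\<le>n. g (cnt U t) (cnt V t))" for U V
  have split: "(\<Sum>t\<le>Suc n. g (cnt U t) (cnt V t)) = h U V + g a b"
    if "U \<in> SS (Suc n) a" "V \<in> SS (Suc n) b" for U V
    using that unfolding h_def SS_def by (simp add: cnt_top)
  have hU: "h (insert (Suc n) U) V = h U V" if "U \<in> SS n c" for U V c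
    using that unfolding h_def SS_def by (auto intro!: sum.cong simp: cnt_insert)
  have hV: "h U (insert (Suc n) V) = h U V" if "V \<in> SS n c" for U V c
    using that unfolding h_def SS_def by (auto intro!: sum.cong simp: cnt_insert)
  have "G g (Suc n) a b = (\<Sum>U\<in>SS (Suc n) a. \<Sum>V\<in>SS (Suc n) b. h U V + g a b)"
    unfolding G_def by (intro sum.cong refl) (rule split)
  also have "\<dots> = (\<Sum>U\<in>SS (Suc n) a. \<Sum>V\<in>SS (Suc n) b. h U V)
      + g a b * real (Suc n choose a) * real (Suc n choose b)"
    by (simp add: sum.distrib card_SS)
  also have "(\<Sum>U\<in>SS (Suc n) a. \<Sum>V\<in>SS (Suc n) b. h U V)
     = (\<Sum>U\<in>SS (Suc n) a. (\<Sum>V\<in>SS n b. h U V) + (if b = 0 then 0 else \<Sum>V\<in>SS n (b-1). h U V))"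
    by (intro sum.cong refl, subst sum_SS_Suc) (auto intro!: sum.cong simp: hV)
  also have "\<dots> = (\<Sum>U\<in>SS n a. (\<Sum>V\<in>SS n b. h U V) + (if b = 0 then 0 else \<Sum>V\<in>SS n (b-1). h U V))
     + (if a = 0 then 0 else (\<Sum>U\<in>SS n (a-1). (\<Sum>V\<in>SS n b. h U V) + (if b = 0 then 0 else \<Sum>V\<in>SS n (b-1). h U V)))"
    by (subst sum_SS_Suc) (auto intro!: sum.cong simp: hU)
  also have "\<dots> = G g n a b + (if a=0 then 0 else G g n (a-1) b)
   + (if b = 0 then 0 else G g n a (b-1)) + (if a=0 \<or> b=0 then 0 else G g n (a-1) (b-1))"
    unfolding G_def h_def by (simp add: sum.distrib)
  finally show ?thesis by simp
qed


lemma absorb_nat: "Suc k * (n choose Suc k) = (n - k) * (n choose k)"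
  using binomial_absorb_comp[of n k] binomial_absorption[of k n] by simp

lemma absorb_real: "real (Suc k) * real (n choose Suc k) = (real n - real k) * real (n choose k)"
proof (cases "k \<le> n")
  case True
  have "real (Suc k * (n choose Suc k)) = real ((n - k) * (n choose k))" by (simp only: absorb_nat)
  then show ?thesis using True by (simp add: of_nat_diff algebra_simps)
next
  case False
  then show ?thesis by (simp add: binomial_eq_0)
qed

lemma Q_closed: "G (\<lambda>x y. real x - real y) n a b
   = (real a - real b) * (real n + 1) / 2 * real (n choose a) * real (n choose b)"
proof (induction n arbitrary: a b)
  case 0
  then show ?case by (simp add: G_0)
next
  case (Suc n)
  show ?case
  proof (cases a)
    case 0
    then show ?thesis
    proof (cases b)
      case 0
      then show ?thesis using \<open>a = 0\<close> by (simp add: G_Suc Suc.IH)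
    next
      case (Suc b')
      have r: "real (Suc b') * real (n choose Suc b') = (real n - real b') * real (n choose b')"
        by (rule absorb_real)
      show ?thesis unfolding \<open>a = 0\<close> Suc using r by (simp add: G_Suc Suc.IH) algebra
    qed
  next
    case (Suc a')
    have ra: "real (Suc a') * real (n choose Suc a') = (real n - real a') * real (n choose a')"
      by (rule absorb_real)
    show ?thesis
    proof (cases b)
      case 0
      show ?thesis unfolding \<open>a = Suc a'\<close> 0 using ra by (simp add: G_Suc Suc.IH) algebra
    next
      case (Suc b')
      have rb: "real (Suc b') * real (n choose Suc b') = (real n - real b') * real (n choose b')"
        by (rule absorb_real)
      show ?thesis unfolding \<open>a = Suc a'\<close> Suc using ra rb apply (simp add: G_Suc Suc.IH)
        apply algebra done
    qed
  qed
qed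


definition K :: "nat \<Rightarrow> nat \<Rightarrow> nat \<Rightarrow> real" where
  "K n a b = G (\<lambda>x y. max 0 (real x - real y)) n a b"

lemma G_swap: "G g n b a = G (\<lambda>x y. g y x) n a b"
  unfolding G_def by (subst sum.swap) simp

lemma G_diff: "G (\<lambda>x y. g1 x y - g2 x y) n a b = G g1 n a b - G g2 n a b"
  unfolding G_def by (simp add: sum_subtractf)

lemma G_add: "G (\<lambda>x y. g1 x y + g2 x y) n a b = G g1 n a b + G g2 n a b"
  unfolding G_def by (simp add: sum.distrib)

lemma K_anti: "K n a b - K n b a = (real a - real b) * (real n + 1) / 2 * real (n choose a) * real (n choose b)"
proof -
  have "K n a b - K n b a = G (\<lambda>x y. max 0 (real x - real y) - max 0 (real y - real x)) n a b"
    unfolding K_def by (subst G_swap[of _ n b a]) (simp add: G_diff)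
  also have "\<dots> = G (\<lambda>x y. real x - real y) n a b"
    unfolding G_def by (intro sum.cong refl) (simp add: max_def)
  finally show ?thesis by (simp add: Q_closed)
qed

definition rb :: "int \<Rightarrow> int \<Rightarrow> real" where
  "rb M j = (if 0 \<le> M \<and> 0 \<le> j then real (nat M choose nat j) else 0)"

lemma rb_nat[simp]: "rb (int n) (int a) = real (n choose a)"
  unfolding rb_def by simp

lemma rb_neg1[simp]: "j < 0 \<Longrightarrow> rb M j = 0"
  unfolding rb_def by simp

lemma rb_neg2: "M < 0 \<Longrightarrow> rb M j = 0"
  unfolding rb_def by simp

definition fs :: "int \<Rightarrow> int \<Rightarrow> real" where
  "fs n a = real_of_int n / 2 * rb (n-1) a * rb (n-1) (a-1)"

definition P :: "nat \<Rightarrow> nat \<Rightarrow> nat \<Rightarrow> real" where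
  "P n a b = (\<Sum>i\<le>n. \<Sum>j\<le>a. real ((n-i) choose (a-j)) * real ((n-i) choose (b-j)) * fs (int i) (int j))"

lemma fs_Suc: "fs (int (Suc n)) (int a) = (if a = 0 then 0 else (real n + 1) / 2 * real (n choose a) * real (n choose (a-1)))"
proof (cases a)
  case 0 then show ?thesis by (simp add: fs_def)
next
  case (Suc a')
  have "rb (int (Suc n) - 1) (int a - 1) = real (n choose a')"
    using rb_nat[of n a'] Suc by simp
  moreover have "rb (int (Suc n) - 1) (int a) = real (n choose a)"
    using rb_nat[of n a] by simp
  ultimately show ?thesis unfolding fs_def using Suc by (simp add: algebra_simps)
qed

lemma fs_0: "fs 0 a = 0" unfolding fs_def by simp

lemma pascal_lt:
  assumes "a < b"
  shows "(\<Sum>j\<le>a. real (Suc L choose (a-j)) * real (Suc L choose (b-j)) * w j)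
   = (\<Sum>j\<le>a. real (L choose (a-j)) * real (L choose (b-j)) * w j)
   + (\<Sum>j\<le>a. real (L choose (a-j)) * real (L choose (b-1-j)) * w j)
   + (if a = 0 then 0 else (\<Sum>j\<le>a-1. real (L choose (a-1-j)) * real (L choose (b-j)) * w j)
        + (\<Sum>j\<le>a-1. real (L choose (a-1-j)) * real (L choose (b-1-j)) * w j))"
proof -
  have bj: "real (Suc L choose (b-j)) = real (L choose (b-j)) + real (L choose (b-1-j))" if "j \<le> a" for j
  proof -
    have e: "b - j = Suc (b-1-j)" using that assms by simp
    show ?thesis unfolding e binomial_Suc_Suc of_nat_add by simp
  qed
  show ?thesis
  proof (cases a)
    case 0
    then show ?thesis using bj[of 0] by (simp add: algebra_simps)
  next
    case (Suc a')
    have aj: "real (Suc L choose (a-j)) = real (L choose (a-j)) + real (L choose (a-1-j))" if "j \<le> a'" for j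
    proof -
      have e: "a - j = Suc (a-1-j)" using that Suc by simp
      show ?thesis unfolding e binomial_Suc_Suc of_nat_add by simp
    qed
    have "(\<Sum>j\<le>a. real (Suc L choose (a-j)) * real (Suc L choose (b-j)) * w j)
       = (\<Sum>j\<le>a'. real (Suc L choose (a-j)) * real (Suc L choose (b-j)) * w j)
         + real (Suc L choose (b-a)) * w a"
      using Suc by simp
    also have "(\<Sum>j\<le>a'. real (Suc L choose (a-j)) * real (Suc L choose (b-j)) * w j)
       = (\<Sum>j\<le>a'. real (L choose (a-j)) * real (L choose (b-j)) * w j
          + real (L choose (a-j)) * real (L choose (b-1-j)) * w j
          + real (L choose (a-1-j)) * real (L choose (b-j)) * w j
          + real (L choose (a-1-j)) * real (L choose (b-1-j)) * w j)"
    proof (intro sum.cong refl)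
      fix j assume "j \<in> {..a'}"
      then have j1: "j \<le> a'" and j2: "j \<le> a" using Suc by auto
      show "real (Suc L choose (a-j)) * real (Suc L choose (b-j)) * w j =
          real (L choose (a-j)) * real (L choose (b-j)) * w j
          + real (L choose (a-j)) * real (L choose (b-1-j)) * w j
          + real (L choose (a-1-j)) * real (L choose (b-j)) * w j
          + real (L choose (a-1-j)) * real (L choose (b-1-j)) * w j"
        unfolding aj[OF j1] bj[OF j2] by (simp add: algebra_simps)
    qed
    finally show ?thesis using Suc bj[of a]
      by (simp add: sum.distrib algebra_simps)
  qed
qed

lemma pascal_eq:
  "(\<Sum>j\<le>a. real (Suc L choose (a-j)) * real (Suc L choose (a-j)) * w j)
   = (\<Sum>j\<le>a. real (L choose (a-j)) * real (L choose (a-j)) * w j)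
   + (if a = 0 then 0 else 2 * (\<Sum>j\<le>a-1. real (L choose (a-1-j)) * real (L choose (a-j)) * w j)
        + (\<Sum>j\<le>a-1. real (L choose (a-1-j)) * real (L choose (a-1-j)) * w j))"
proof (cases a)
  case 0
  then show ?thesis by simp
next
  case (Suc a')
  have aj: "real (Suc L choose (a-j)) = real (L choose (a-j)) + real (L choose (a-1-j))" if "j \<le> a'" for j
  proof -
    have e: "a - j = Suc (a-1-j)" using that Suc by simp
    show ?thesis unfolding e binomial_Suc_Suc of_nat_add by simp
  qed
  have "(\<Sum>j\<le>a. real (Suc L choose (a-j)) * real (Suc L choose (a-j)) * w j)
     = (\<Sum>j\<le>a'. real (Suc L choose (a-j)) * real (Suc L choose (a-j)) * w j) + w a"
    using Suc by simp
  also have "(\<Sum>j\<le>a'. real (Suc L choose (a-j)) * real (Suc L choose (a-j)) * w j)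
     = (\<Sum>j\<le>a'. real (L choose (a-j)) * real (L choose (a-j)) * w j
          + 2 * (real (L choose (a-1-j)) * real (L choose (a-j)) * w j)
          + real (L choose (a-1-j)) * real (L choose (a-1-j)) * w j)"
  proof (intro sum.cong refl)
    fix j assume "j \<in> {..a'}"
    then have j1: "j \<le> a'" by auto
    show "real (Suc L choose (a-j)) * real (Suc L choose (a-j)) * w j =
          real (L choose (a-j)) * real (L choose (a-j)) * w j
          + 2 * (real (L choose (a-1-j)) * real (L choose (a-j)) * w j)
          + real (L choose (a-1-j)) * real (L choose (a-1-j)) * w j"
      unfolding aj[OF j1] by (simp add: algebra_simps)
  qed
  finally show ?thesis using Suc
    by (simp add: sum.distrib sum_distrib_left algebra_simps)
qed

lemma P_Suc_lt:
  assumes "a < b"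
  shows "P (Suc n) a b = P n a b + P n a (b-1) + (if a = 0 then 0 else P n (a-1) b + P n (a-1) (b-1))"
proof -
  have last: "(\<Sum>j\<le>a. real ((Suc n - Suc n) choose (a-j)) * real ((Suc n - Suc n) choose (b-j)) * fs (int (Suc n)) (int j)) = 0"
    using assms by (intro sum.neutral) auto
  have "P (Suc n) a b = (\<Sum>i\<le>n. \<Sum>j\<le>a. real (Suc (n-i) choose (a-j)) * real (Suc (n-i) choose (b-j)) * fs (int i) (int j))"
    unfolding P_def sum.atMost_Suc last by (simp add: Suc_diff_le)
  also have "\<dots> = (\<Sum>i\<le>n. (\<Sum>j\<le>a. real ((n-i) choose (a-j)) * real ((n-i) choose (b-j)) * fs (int i) (int j))
   + (\<Sum>j\<le>a. real ((n-i) choose (a-j)) * real ((n-i) choose (b-1-j)) * fs (int i) (int j))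
   + (if a = 0 then 0 else (\<Sum>j\<le>a-1. real ((n-i) choose (a-1-j)) * real ((n-i) choose (b-j)) * fs (int i) (int j))
        + (\<Sum>j\<le>a-1. real ((n-i) choose (a-1-j)) * real ((n-i) choose (b-1-j)) * fs (int i) (int j))))"
    by (intro sum.cong refl pascal_lt assms)
  also have "\<dots> = P n a b + P n a (b-1) + (if a = 0 then 0 else P n (a-1) b + P n (a-1) (b-1))"
    unfolding P_def by (simp add: sum.distrib)
  finally show ?thesis .
qed

lemma P_Suc_eq:
  "P (Suc n) a a = P n a a + (if a = 0 then 0 else 2 * P n (a-1) a + P n (a-1) (a-1)) + fs (int (Suc n)) (int a)"
proof -
  have last: "(\<Sum>j\<le>a. real ((Suc n - Suc n) choose (a-j)) * real ((Suc n - Suc n) choose (a-j)) * fs (int (Suc n)) (int j))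
     = fs (int (Suc n)) (int a)"
  proof -
    have "(\<Sum>j\<le>a. real ((Suc n - Suc n) choose (a-j)) * real ((Suc n - Suc n) choose (a-j)) * fs (int (Suc n)) (int j))
       = (\<Sum>j\<in>{a}. real ((Suc n - Suc n) choose (a-j)) * real ((Suc n - Suc n) choose (a-j)) * fs (int (Suc n)) (int j))"
      by (intro sum.mono_neutral_right) auto
    then show ?thesis by simp
  qed
  have "P (Suc n) a a = (\<Sum>i\<le>n. \<Sum>j\<le>a. real (Suc (n-i) choose (a-j)) * real (Suc (n-i) choose (a-j)) * fs (int i) (int j))
       + fs (int (Suc n)) (int a)"
    unfolding P_def sum.atMost_Suc last by (simp add: Suc_diff_le)
  also have "(\<Sum>i\<le>n. \<Sum>j\<le>a. real (Suc (n-i) choose (a-j)) * real (Suc (n-i) choose (a-j)) * fs (int i) (int j))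
     = (\<Sum>i\<le>n. (\<Sum>j\<le>a. real ((n-i) choose (a-j)) * real ((n-i) choose (a-j)) * fs (int i) (int j))
   + (if a = 0 then 0 else 2 * (\<Sum>j\<le>a-1. real ((n-i) choose (a-1-j)) * real ((n-i) choose (a-j)) * fs (int i) (int j))
        + (\<Sum>j\<le>a-1. real ((n-i) choose (a-1-j)) * real ((n-i) choose (a-1-j)) * fs (int i) (int j))))"
    by (intro sum.cong refl pascal_eq)
  also have "\<dots> = P n a a + (if a = 0 then 0 else 2 * P n (a-1) a + P n (a-1) (a-1))"
    unfolding P_def by (simp add: sum.distrib sum_distrib_left)
  finally show ?thesis by simp
qed

lemma K_Suc: "K (Suc n) a b = K n a b + (if a=0 then 0 else K n (a-1) b)
   + (if b = 0 then 0 else K n a (b-1)) + (if a=0 \<or> b=0 then 0 else K n (a-1) (b-1))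
   + max 0 (real a - real b) * real (Suc n choose a) * real (Suc n choose b)"
  unfolding K_def by (rule G_Suc)

lemma P_0: "P 0 a b = 0"
  unfolding P_def by (simp add: fs_0)

lemma K_0: "K 0 a b = 0"
  unfolding K_def by (simp add: G_0)

lemma K_eq_P: "a \<le> b \<Longrightarrow> K n a b = P n a b"
proof (induction n arbitrary: a b)
  case 0
  then show ?case by (simp add: K_0 P_0)
next
  case (Suc n)
  show ?case
  proof (cases "a < b")
    case True
    then have b0: "b \<noteq> 0" by simp
    have m: "max 0 (real a - real b) = 0" using True by simp
    show ?thesis
      using True b0 Suc.IH[of a b] Suc.IH[of a "b-1"] Suc.IH[of "a-1" b] Suc.IH[of "a-1" "b-1"]
      by (simp add: K_Suc m P_Suc_lt)
  next
    case False
    then have ab: "b = a" using Suc.prems by simp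
    show ?thesis
    proof (cases a)
      case 0
      then show ?thesis using ab Suc.IH[of 0 0] by (simp add: K_Suc P_Suc_eq fs_def)
    next
      case (Suc a')
      have anti: "K n a a' = K n a' a + (real n + 1) / 2 * real (n choose a) * real (n choose a')"
        using K_anti[of n a a'] Suc by simp
      have fsv: "fs (int (Suc n)) (int a) = (real n + 1) / 2 * real (n choose a) * real (n choose a')"
        using fs_Suc[of n a] Suc by simp
      show ?thesis
        using ab Suc Suc.IH[of a a] Suc.IH[of a' a] Suc.IH[of a' a'] anti fsv
        by (simp add: K_Suc P_Suc_eq)
    qed
  qed
qed


definition vz :: "(int \<Rightarrow> int \<Rightarrow> real) \<Rightarrow> bool" where
  "vz f \<longleftrightarrow> (\<forall>i j. i < 0 \<or> j < 0 \<longrightarrow> f i j = 0)"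

definition A2 :: "(int \<Rightarrow> int \<Rightarrow> real) \<Rightarrow> real fps fps" where
  "A2 f = Abs_fps (\<lambda>n. Abs_fps (\<lambda>a. f (int n) (int a)))"

definition Dl :: "real fps fps" where
  "Dl = 1 - fps_const (2 * (1 + fps_X)) * fps_X + fps_const ((1 - fps_X)^2) * fps_X^2"

lemma A2_nth[simp]: "A2 f $ n $ a = f (int n) (int a)"
  unfolding A2_def by simp

lemma numeral_mult_nth: "(numeral k * (p :: 'a::comm_semiring_1 fps)) $ a = numeral k * p $ a"
  by (simp add: numeral_fps_const)

lemma in1: "((1 + fps_X) * (p :: real fps)) $ a = p $ a + (if a = 0 then 0 else p $ (a-1))"
  by (simp add: distrib_right)

lemma in2: "((1 - fps_X)^2 * (p :: real fps)) $ a = p $ a - 2 * (if a = 0 then 0 else p $ (a-1))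
    + (if a < 2 then 0 else p $ (a-2))"
proof -
  have e: "(1 - fps_X)^2 * p = p - 2 * (fps_X * p) + fps_X^2 * p"
    by (simp add: power2_eq_square algebra_simps)
  show ?thesis unfolding e by (simp add: numeral_mult_nth fps_X_power_mult_nth)
qed

lemma ish1: "(\<And>j. j < 0 \<Longrightarrow> h j = 0) \<Longrightarrow> (if a = 0 then 0 else Abs_fps (\<lambda>a. h (int a)) $ (a-1)) = h (int a - 1)"
  by (cases a) auto

lemma ish2: "(\<And>j. j < 0 \<Longrightarrow> h j = 0) \<Longrightarrow> (if a < 2 then 0 else Abs_fps (\<lambda>a. h (int a)) $ (a-2)) = h (int a - 2)"
  by (cases a; cases "a - 1") auto

lemma sh1:
  assumes "vz f"
  shows "(if n = 0 then 0 else A2 f $ (n - 1)) = Abs_fps (\<lambda>a. f (int n - 1) (int a))"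
  using assms unfolding vz_def by (cases n) (auto simp: fps_eq_iff)

lemma sh2:
  assumes "vz f"
  shows "(if n < 2 then 0 else A2 f $ (n - 2)) = Abs_fps (\<lambda>a. f (int n - 2) (int a))"
  using assms unfolding vz_def by (cases n; cases "n-1") (auto simp: fps_eq_iff)

lemma Dl_coeff:
  assumes "vz f"
  shows "(Dl * A2 f) $ n $ a = f (int n) (int a) - 2 * f (int n - 1) (int a) - 2 * f (int n - 1) (int a - 1)
     + f (int n - 2) (int a) - 2 * f (int n - 2) (int a - 1) + f (int n - 2) (int a - 2)"
proof -
  have e: "Dl * A2 f = A2 f - fps_const (2 * (1 + fps_X)) * (fps_X * A2 f)
       + fps_const ((1 - fps_X)^2) * (fps_X^2 * A2 f)"
    unfolding Dl_def by (simp add: algebra_simps)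
  have "(Dl * A2 f) $ n = A2 f $ n - 2 * ((1 + fps_X) * (if n = 0 then 0 else A2 f $ (n - 1)))
      + (1 - fps_X)^2 * (if n < 2 then 0 else A2 f $ (n - 2))"
    unfolding e by (simp add: fps_X_mult_nth fps_X_power_mult_nth)
  also have "\<dots> = A2 f $ n - 2 * ((1 + fps_X) * Abs_fps (\<lambda>a. f (int n - 1) (int a)))
      + (1 - fps_X)^2 * Abs_fps (\<lambda>a. f (int n - 2) (int a))"
    by (simp only: sh1[OF assms] sh2[OF assms])
  finally have *: "(Dl * A2 f) $ n = \<dots>" .
  have v1: "f (int n - 1) j = 0" if "j < 0" for j using assms that unfolding vz_def by auto
  have v2: "f (int n - 2) j = 0" if "j < 0" for j using assms that unfolding vz_def by auto
  show ?thesis unfolding * fps_add_nth fps_sub_nth numeral_mult_nth in1 in2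
    using ish1[of "\<lambda>j. f (int n - 1) j", OF v1, of a] ish2[of "\<lambda>j. f (int n - 2) j", OF v2, of a]
      ish1[of "\<lambda>j. f (int n - 2) j", OF v2, of a]
    by simp
qed



lemma rb_pascal: "0 \<le> M \<Longrightarrow> rb (M+1) j = rb M j + rb M (j-1)"
proof -
  assume M: "0 \<le> M"
  obtain m where m: "M = int m" using M nonneg_eq_int by blast
  show ?thesis
  proof (cases "j < 0")
    case True then show ?thesis by simp
  next
    case False
    then obtain k where k: "j = int k" using nonneg_eq_int by (metis linorder_not_less)
    show ?thesis
    proof (cases k)
      case 0 then show ?thesis using m k by (simp add: rb_def)
    next
      case (Suc k')
      have "rb (M+1) j = real (Suc m choose Suc k')" using m k Suc rb_nat[of "Suc m" "Suc k'"] by (simp add: ac_simps)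
      moreover have "rb M (j-1) = real (m choose k')" using m k Suc rb_nat[of m k'] by simp
      moreover have "rb M j = real (m choose Suc k')" using m k Suc rb_nat[of m "Suc k'"] by simp
      ultimately show ?thesis by (simp add: add.commute)
    qed
  qed
qed

lemma rb_absorb: "0 \<le> M \<Longrightarrow> (real_of_int j + 1) * rb M (j+1) = (real_of_int M - real_of_int j) * rb M j"
proof -
  assume M: "0 \<le> M"
  obtain m where m: "M = int m" using M nonneg_eq_int by blast
  show ?thesis
  proof (cases "j < 0")
    case True
    then have "j = -1 \<or> j < -1" by auto
    then show ?thesis using True by auto
  next
    case False
    then obtain k where k: "j = int k" using nonneg_eq_int by (metis linorder_not_less)
    have "rb M (j+1) = real (m choose Suc k)" using m k rb_nat[of m "Suc k"] by (simp add: ac_simps)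
    moreover have "rb M j = real (m choose k)" using m k by simp
    ultimately show ?thesis using absorb_real[of k m] m k by (simp add: add.commute)
  qed
qed

lemma rb0: "rb 0 j = (if j = 0 then 1 else 0)"
  unfolding rb_def by (auto simp: binomial_eq_0)

lemma rb1: "rb 1 j = (if j = 0 \<or> j = 1 then 1 else 0)"
proof -
  have "j < 0 \<or> j = 0 \<or> j = 1 \<or> j > 1" by auto
  then show ?thesis unfolding rb_def
    by (elim disjE) (auto simp: binomial_eq_0 nat_less_iff)
qed

lemma rb2: "rb 2 j = (if j = 0 \<or> j = 2 then 1 else if j = 1 then 2 else 0)"
proof -
  have "j < 0 \<or> j = 0 \<or> j = 1 \<or> j = 2 \<or> j > 2" by auto
  then show ?thesis unfolding rb_def
    by (elim disjE) (auto simp: binomial_eq_0 nat_less_iff numeral_2_eq_2)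
qed

definition fe :: "int \<Rightarrow> int \<Rightarrow> real" where
  "fe n a = rb (2*n+2) (2*a+1) / 2"

lemma fe_id: "0 \<le> n \<Longrightarrow> 0 \<le> a \<Longrightarrow>
  fe n a - 2 * fe (n - 1) a - 2 * fe (n - 1) (a - 1)
     + fe (n - 2) a - 2 * fe (n - 2) (a - 1) + fe (n - 2) (a - 2) = (if n = 0 \<and> a = 0 then 1 else 0)"
proof (cases "n = 0")
  case True
  assume a: "0 \<le> a"
  have "2*a-1 \<noteq> 0" by presburger
  then have z1: "rb 0 (2*a+1) = 0" "rb 0 (2*a-1) = 0" using a by (auto simp: rb0)
  have z2: "rb (-2) j = 0" for j by (simp add: rb_neg2)
  have "rb 2 (2*a+1) = (if a = 0 then 2 else 0)" using a by (auto simp: rb2)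
  then show ?thesis using True z1 z2 unfolding fe_def by (simp add: algebra_simps)
next
  case False
  assume n: "0 \<le> n"
  define M where "M = 2*n - 2"
  have M: "0 \<le> M" using n False unfolding M_def by simp
  have p: "rb (M+k+1) j = rb (M+k) j + rb (M+k) (j-1)" if "0 \<le> k" for k j
    using rb_pascal[of "M+k" j] M that by simp
  have e4: "rb (M+4) j = rb M j + 4 * rb M (j-1) + 6 * rb M (j-2) + 4 * rb M (j-3) + rb M (j-4)" for j
    using p[of 3 j] p[of 3 "j-1"] p[of 2 j] p[of 2 "j-1"] p[of 2 "j-2"] p[of 1 j] p[of 1 "j-1"] p[of 1 "j-2"] p[of 1 "j-3"]
      p[of 0 j] p[of 0 "j-1"] p[of 0 "j-2"] p[of 0 "j-3"]
    by (simp add: algebra_simps)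
  have e2: "rb (M+2) j = rb M j + 2 * rb M (j-1) + rb M (j-2)" for j
    using p[of 1 j] p[of 1 "j-1"] p[of 0 j] p[of 0 "j-1"] p[of 0 "j-2"] by (simp add: algebra_simps)
  have i1: "2*n+2 = M+4" "2*(n-1)+2 = M+2" "2*(n-2)+2 = M" unfolding M_def by simp_all
  show ?thesis
    unfolding fe_def i1 using False e4[of "2*a+1"] e2[of "2*a+1"] e2[of "2*(a-1)+1"]
    by (simp add: field_simps)
qed
definition fc :: "int \<Rightarrow> int \<Rightarrow> real" where "fc i j = rb i j * rb i j"
definition fdc :: "int \<Rightarrow> int \<Rightarrow> real" where "fdc i j = (real_of_int i + 1) * fc (i+1) j"

lemma ode_alg:
  fixes p q r N A :: real
  assumes "A*p = (N - A)*q" "(A - 1)*q = (N - A + 1)*r"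
  shows "2*((N+1)*((p+2*q+r)*(p+2*q+r)) - 2*(N*((p+q)*(p+q))) - 2*(N*((q+r)*(q+r))) + (N-1)*(p*p) - 2*((N-1)*(q*q)) + (N-1)*(r*r))
    + (-2*((p+q)*(p+q)) - 2*((q+r)*(q+r)) + 2*(p*p) - 4*(q*q) + 2*(r*r)) = 0"
  using assms by algebra

lemma ode_id:
  assumes n: "0 \<le> n" and a: "0 \<le> a"
  shows "2 * (fdc n a - 2 * fdc (n-1) a - 2 * fdc (n-1) (a-1) + fdc (n-2) a - 2 * fdc (n-2) (a-1) + fdc (n-2) (a-2))
    + (-2 * fc n a - 2 * fc n (a-1) + 2 * fc (n-1) a - 4 * fc (n-1) (a-1) + 2 * fc (n-1) (a-2)) = 0"
proof (cases "n = 0")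
  case True
  have "a = 0 \<or> a = 1 \<or> a \<ge> 2" using a by auto
  then show ?thesis using True unfolding fdc_def fc_def
    by (elim disjE) (auto simp: rb0 rb1 rb_neg2)
next
  case False
  define M where "M = n - 1"
  have M: "0 \<le> M" using n False unfolding M_def by simp
  have p: "rb (M+k+1) j = rb (M+k) j + rb (M+k) (j-1)" if "0 \<le> k" for k j
    using rb_pascal[of "M+k" j] M that by simp
  have e2: "rb (M+2) j = rb M j + 2 * rb M (j-1) + rb M (j-2)" for j
    using p[of 1 j] p[of 1 "j-1"] p[of 0 j] p[of 0 "j-1"] p[of 0 "j-2"] by (simp add: algebra_simps)
  have e1: "rb (M+1) j = rb M j + rb M (j-1)" for j using p[of 0 j] by simp
  have ab: "(real_of_int j + 1) * rb M (j+1) = (real_of_int M - real_of_int j) * rb M j" for j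
    using rb_absorb[OF M] .
  have r1: "real_of_int a * rb M a = (real_of_int n - real_of_int a) * rb M (a-1)"
    using ab[of "a-1"] unfolding M_def by simp
  have r2: "(real_of_int a - 1) * rb M (a-1) = (real_of_int n - real_of_int a + 1) * rb M (a-2)"
    using ab[of "a-2"] unfolding M_def by (simp add: algebra_simps)
  have e2': "rb (2+M) j = rb M j + 2 * rb M (j-1) + rb M (j-2)" for j using e2 by (simp add: add.commute)
  have e1': "rb (1+M) j = rb M j + rb M (j-1)" for j using e1 by (simp add: add.commute)
  have nM: "n = M + 1" unfolding M_def by simp
  note key = ode_alg[OF r1 r2]
  show ?thesis
    using key unfolding fdc_def fc_def nM
    by (simp add: algebra_simps e2 e1 e2' e1')
qed
lemma s_alg:
  fixes p0 p1 p2 p3 N A :: real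
  assumes "A*p0 = (N - A - 2)*p1" "(A - 1)*p1 = (N - A - 1)*p2" "(A - 2)*p2 = (N - A)*p3"
  shows "N/2*((p0+2*p1+p2)*(p1+2*p2+p3)) - 2*((N-1)/2*((p0+p1)*(p1+p2))) - 2*((N-1)/2*((p1+p2)*(p2+p3)))
     + (N-2)/2*(p0*p1) - 2*((N-2)/2*(p1*p2)) + (N-2)/2*(p2*p3) = (p1+p2)*(p1+p2)"
proof -
  have "N*((p0+2*p1+p2)*(p1+2*p2+p3)) - 2*((N-1)*((p0+p1)*(p1+p2))) - 2*((N-1)*((p1+p2)*(p2+p3)))
     + (N-2)*(p0*p1) - 2*((N-2)*(p1*p2)) + (N-2)*(p2*p3) = 2*((p1+p2)*(p1+p2))"
    using assms by algebra
  then show ?thesis by (simp add: field_simps)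
qed

lemma v_alg:
  fixes b0 b1 b2 b3 b4 N A :: real
  assumes "(2*A-2)*b1 = (2*N-2-2*A+3)*b0" "(2*A-1)*b2 = (2*N-2-2*A+2)*b1"
    "(2*A)*b3 = (2*N-2-2*A+1)*b2" "(2*A+1)*b4 = (2*N-2-2*A)*b3"
    and d: "8*N+4 \<noteq> 0" "8*N-4 \<noteq> 0" "8*N-12 \<noteq> 0"
  shows "A*(N-A)/(8*N+4)*(b4+4*b3+6*b2+4*b1+b0) - 2*(A*(N-1-A)/(8*N-4)*(b4+2*b3+b2))
     - 2*((A-1)*(N-A)/(8*N-4)*(b2+2*b1+b0)) + A*(N-2-A)/(8*N-12)*b4
     - 2*((A-1)*(N-1-A)/(8*N-12)*b2) + (A-2)*(N-A)/(8*N-12)*b0 = b2/2"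
proof -
  define PP where "PP = 2*(A*(N-A)*(8*N-4)*(8*N-12)*(b4+4*b3+6*b2+4*b1+b0) - 2*(A*(N-1-A)*(8*N+4)*(8*N-12)*(b4+2*b3+b2))
     - 2*((A-1)*(N-A)*(8*N+4)*(8*N-12)*(b2+2*b1+b0)) + A*(N-2-A)*(8*N+4)*(8*N-4)*b4
     - 2*((A-1)*(N-1-A)*(8*N+4)*(8*N-4)*b2) + (A-2)*(N-A)*(8*N+4)*(8*N-4)*b0)"
  have P: "PP = b2*((8*N+4)*(8*N-4)*(8*N-12))"
    unfolding PP_def using assms(1-4) by algebra
  have L: "A*(N-A)/(8*N+4)*(b4+4*b3+6*b2+4*b1+b0) - 2*(A*(N-1-A)/(8*N-4)*(b4+2*b3+b2))
     - 2*((A-1)*(N-A)/(8*N-4)*(b2+2*b1+b0)) + A*(N-2-A)/(8*N-12)*b4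
     - 2*((A-1)*(N-1-A)/(8*N-12)*b2) + (A-2)*(N-A)/(8*N-12)*b0 = PP / (2*((8*N+4)*(8*N-4)*(8*N-12)))"
    unfolding PP_def using d by (simp add: divide_simps) (simp add: algebra_simps)
  show ?thesis unfolding L P using d by simp
qed

lemma s_id:
  assumes n: "0 \<le> n" and a: "0 \<le> a"
  shows "fs n a - 2 * fs (n-1) a - 2 * fs (n-1) (a-1) + fs (n-2) a - 2 * fs (n-2) (a-1) + fs (n-2) (a-2)
     = fc (n-2) (a-1)"
proof -
  have fsneg: "fs i j = 0" if "i < 1" for i j
  proof -
    have "i = 0 \<or> i < 0" using that by auto
    then show ?thesis unfolding fs_def by (auto simp: rb_neg2)
  qed
  have fs1: "fs 1 j = 0" for j unfolding fs_def by (auto simp: rb0)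
  have fcneg: "fc i j = 0" if "i < 0" for i j unfolding fc_def using that by (simp add: rb_neg2)
  consider "n = 0" | "n = 1" | "n = 2" | "n \<ge> 3" using n by linarith
  then show ?thesis
  proof cases
    case 1 then show ?thesis by (simp add: fsneg fcneg)
  next
    case 2 then show ?thesis by (simp add: fsneg fcneg fs1)
  next
    case 3
    have "fs 2 a = (if a = 1 then 1 else 0)" unfolding fs_def by (auto simp: rb1)
    moreover have "fc 0 (a-1) = (if a = 1 then 1 else 0)" unfolding fc_def by (auto simp: rb0)
    ultimately show ?thesis using 3 by (simp add: fsneg fs1)
  next
    case 4
    define M where "M = n - 3"
    have M: "0 \<le> M" using 4 unfolding M_def by simp
    have p: "rb (M+k+1) j = rb (M+k) j + rb (M+k) (j-1)" if "0 \<le> k" for k j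
      using rb_pascal[of "M+k" j] M that by simp
    have e2: "rb (M+2) j = rb M j + 2 * rb M (j-1) + rb M (j-2)" for j
      using p[of 1 j] p[of 1 "j-1"] p[of 0 j] p[of 0 "j-1"] p[of 0 "j-2"] by (simp add: algebra_simps)
    have e1: "rb (M+1) j = rb M j + rb M (j-1)" for j using p[of 0 j] by simp
    have ab: "(real_of_int j + 1) * rb M (j+1) = (real_of_int M - real_of_int j) * rb M j" for j
      using rb_absorb[OF M] .
    define N where "N = real_of_int n"
    define A where "A = real_of_int a"
    define p0 where "p0 = rb M a"
    define p1 where "p1 = rb M (a-1)"
    define p2 where "p2 = rb M (a-2)"
    define p3 where "p3 = rb M (a-3)"
    have r1: "A*p0 = (N - A - 2)*p1" using ab[of "a-1"] unfolding A_def N_def p0_def p1_def M_def by simp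
    have r2: "(A - 1)*p1 = (N - A - 1)*p2" using ab[of "a-2"] unfolding A_def N_def p1_def p2_def M_def
      by (simp add: algebra_simps)
    have r3: "(A - 2)*p2 = (N - A)*p3" using ab[of "a-3"] unfolding A_def N_def p2_def p3_def M_def
      by (simp add: algebra_simps)
    have e2': "rb (2+M) j = rb M j + 2 * rb M (j-1) + rb M (j-2)" for j using e2 by (simp add: add.commute)
    have e1': "rb (1+M) j = rb M j + rb M (j-1)" for j using e1 by (simp add: add.commute)
    have nM: "n = M + 3" unfolding M_def by simp
    have NM: "N = real_of_int M + 3" unfolding N_def nM by simp
    note ee = e1 e2 e1' e2'
    have t1: "fs n a = N/2*((p0+2*p1+p2)*(p1+2*p2+p3))"
      unfolding fs_def NM p0_def p1_def p2_def p3_def nM by (simp add: field_simps ee)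
    have t2: "fs (n-1) a = (N-1)/2*((p0+p1)*(p1+p2))"
      unfolding fs_def NM p0_def p1_def p2_def p3_def nM by (simp add: field_simps ee)
    have t3: "fs (n-1) (a-1) = (N-1)/2*((p1+p2)*(p2+p3))"
      unfolding fs_def NM p0_def p1_def p2_def p3_def nM by (simp add: field_simps ee)
    have t4: "fs (n-2) a = (N-2)/2*(p0*p1)"
      unfolding fs_def NM p0_def p1_def p2_def p3_def nM by (simp add: field_simps ee)
    have t5: "fs (n-2) (a-1) = (N-2)/2*(p1*p2)"
      unfolding fs_def NM p0_def p1_def p2_def p3_def nM by (simp add: field_simps ee)
    have t6: "fs (n-2) (a-2) = (N-2)/2*(p2*p3)"
      unfolding fs_def NM p0_def p1_def p2_def p3_def nM by (simp add: field_simps ee)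
    have t7: "fc (n-2) (a-1) = (p1+p2)*(p1+p2)"
      unfolding fc_def p1_def p2_def nM by (simp add: field_simps ee)
    show ?thesis unfolding t1 t2 t3 t4 t5 t6 t7 by (rule s_alg[OF r1 r2 r3])
  qed
qed
definition fv :: "int \<Rightarrow> int \<Rightarrow> real" where
  "fv i j = real_of_int j * real_of_int (i - j) / (8 * real_of_int i + 4) * rb (2*i+2) (2*j+1)"

lemma v_id:
  assumes n: "0 \<le> n" and a: "0 \<le> a"
  shows "fv n a - 2 * fv (n-1) a - 2 * fv (n-1) (a-1) + fv (n-2) a - 2 * fv (n-2) (a-1) + fv (n-2) (a-2)
     = fe (n-2) (a-1)"
proof (cases "n = 0")
  case True
  have odd: "2*j+1 \<noteq> 0" for j :: int by presburger
  have z: "fv (-1) j = 0" for j unfolding fv_def using odd[of j] by (simp add: rb0)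
  have z2: "fv (-2) j = 0" for j unfolding fv_def by (simp add: rb_neg2)
  have z3: "fe (-2) j = 0" for j unfolding fe_def by (simp add: rb_neg2)
  have z0: "fv 0 a = 0"
  proof (cases "a = 0")
    case False
    then have "2*a+1 > 2" using a by simp
    then show ?thesis unfolding fv_def by (simp add: rb2)
  qed (simp add: fv_def)
  show ?thesis using True z z2 z3 z0 by simp
next
  case False
  define M where "M = 2*n - 2"
  have M: "0 \<le> M" using n False unfolding M_def by simp
  have p: "rb (M+k+1) j = rb (M+k) j + rb (M+k) (j-1)" if "0 \<le> k" for k j
    using rb_pascal[of "M+k" j] M that by simp
  have e4: "rb (M+4) j = rb M j + 4 * rb M (j-1) + 6 * rb M (j-2) + 4 * rb M (j-3) + rb M (j-4)" for j
    using p[of 3 j] p[of 3 "j-1"] p[of 2 j] p[of 2 "j-1"] p[of 2 "j-2"] p[of 1 j] p[of 1 "j-1"] p[of 1 "j-2"] p[of 1 "j-3"]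
      p[of 0 j] p[of 0 "j-1"] p[of 0 "j-2"] p[of 0 "j-3"]
    by (simp add: algebra_simps)
  have e2: "rb (M+2) j = rb M j + 2 * rb M (j-1) + rb M (j-2)" for j
    using p[of 1 j] p[of 1 "j-1"] p[of 0 j] p[of 0 "j-1"] p[of 0 "j-2"] by (simp add: algebra_simps)
  have ab: "(real_of_int j + 1) * rb M (j+1) = (real_of_int M - real_of_int j) * rb M j" for j
    using rb_absorb[OF M] .
  define N where "N = real_of_int n"
  define A where "A = real_of_int a"
  define b0 where "b0 = rb M (2*a-3)"
  define b1 where "b1 = rb M (2*a-2)"
  define b2 where "b2 = rb M (2*a-1)"
  define b3 where "b3 = rb M (2*a)"
  define b4 where "b4 = rb M (2*a+1)"
  have r1: "(2*A-2)*b1 = (2*N-2-2*A+3)*b0" using ab[of "2*a-3"] unfolding A_def N_def b0_def b1_def M_def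
    by (simp add: algebra_simps)
  have r2: "(2*A-1)*b2 = (2*N-2-2*A+2)*b1" using ab[of "2*a-2"] unfolding A_def N_def b1_def b2_def M_def
    by (simp add: algebra_simps)
  have r3: "(2*A)*b3 = (2*N-2-2*A+1)*b2" using ab[of "2*a-1"] unfolding A_def N_def b2_def b3_def M_def
    by (simp add: algebra_simps)
  have r4: "(2*A+1)*b4 = (2*N-2-2*A)*b3" using ab[of "2*a"] unfolding A_def N_def b3_def b4_def M_def
    by (simp add: algebra_simps)
  have d1: "8*N+4 \<noteq> 0" unfolding N_def
  proof
    assume "8 * real_of_int n + 4 = 0"
    then have "real_of_int (8*n+4) = 0" by simp
    then have "8*n+4 = 0" by linarith
    then show False by presburger
  qed
  have d2: "8*N-4 \<noteq> 0" unfolding N_def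
  proof
    assume "8 * real_of_int n - 4 = 0"
    then have "real_of_int (8*n-4) = 0" by simp
    then have "8*n-4 = 0" by linarith
    then show False by presburger
  qed
  have d3: "8*N-12 \<noteq> 0" unfolding N_def
  proof
    assume "8 * real_of_int n - 12 = 0"
    then have "real_of_int (8*n-12) = 0" by simp
    then have "8*n-12 = 0" by linarith
    then show False by presburger
  qed
  have i1: "2*n+2 = M+4" "2*(n-1)+2 = M+2" "2*(n-2)+2 = M" unfolding M_def by simp_all
  have j1: "2*(a-1)+1 = 2*a-1" "2*(a-2)+1 = 2*a-3" by simp_all
  have ex4: "rb (M+4) (2*a+1) = b4+4*b3+6*b2+4*b1+b0"
    unfolding e4 b0_def b1_def b2_def b3_def b4_def by (simp add: algebra_simps)
  have ex2a: "rb (M+2) (2*a+1) = b4+2*b3+b2"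
    unfolding e2 b2_def b3_def b4_def by (simp add: algebra_simps)
  have ex2b: "rb (M+2) (2*a-1) = b2+2*b1+b0"
    unfolding e2 b0_def b1_def b2_def by (simp add: algebra_simps)
  have t1: "fv n a = A*(N-A)/(8*N+4)*(b4+4*b3+6*b2+4*b1+b0)"
    unfolding fv_def i1 ex4 A_def N_def by simp
  have t2: "fv (n-1) a = A*(N-1-A)/(8*N-4)*(b4+2*b3+b2)"
    unfolding fv_def i1 ex2a A_def N_def by (simp add: algebra_simps)
  have t3: "fv (n-1) (a-1) = (A-1)*(N-A)/(8*N-4)*(b2+2*b1+b0)"
    unfolding fv_def i1 j1 ex2b A_def N_def by (simp add: algebra_simps)
  have t4: "fv (n-2) a = A*(N-2-A)/(8*N-12)*b4"
    unfolding fv_def i1 b4_def A_def N_def by (simp add: algebra_simps)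
  have t5: "fv (n-2) (a-1) = (A-1)*(N-1-A)/(8*N-12)*b2"
    unfolding fv_def i1 j1 b2_def A_def N_def by (simp add: algebra_simps)
  have t6: "fv (n-2) (a-2) = (A-2)*(N-A)/(8*N-12)*b0"
    unfolding fv_def i1 j1 b0_def A_def N_def by (simp add: algebra_simps)
  have t7: "fe (n-2) (a-1) = b2/2"
    unfolding fe_def i1 j1 b2_def by simp
  show ?thesis unfolding t1 t2 t3 t4 t5 t6 t7 by (rule v_alg[OF r1 r2 r3 r4 d1 d2 d3])
qed


lemma vz_fc: "vz fc" unfolding vz_def fc_def by (auto simp: rb_neg2)
lemma vz_fdc: "vz fdc" unfolding vz_def fdc_def fc_def
proof (intro allI impI)
  fix i j :: int assume "i < 0 \<or> j < 0"
  then consider "j < 0" | "i = -1" | "i < -1" by linarith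
  then show "(real_of_int i + 1) * (rb (i + 1) j * rb (i + 1) j) = 0"
    by cases (auto simp: rb_neg2)
qed
lemma vz_fs: "vz fs" unfolding vz_def fs_def by (auto simp: rb_neg2)
lemma odd_ne0: "2*j+1 \<noteq> (0::int)" by presburger
lemma vz_fe: "vz fe" unfolding vz_def fe_def
proof (intro allI impI)
  fix i j :: int assume "i < 0 \<or> j < 0"
  then consider "j < 0" | "i = -1" | "i < -1" by linarith
  then show "rb (2 * i + 2) (2 * j + 1) / 2 = 0"
    by cases (auto simp: rb_neg2 rb0 odd_ne0)
qed
lemma vz_fv: "vz fv" unfolding vz_def fv_def
proof (intro allI impI)
  fix i j :: int assume "i < 0 \<or> j < 0"
  then consider "j < 0" | "i = -1" | "i < -1" by linarith
  then show "real_of_int j * real_of_int (i - j) / (8 * real_of_int i + 4) * rb (2 * i + 2) (2 * j + 1) = 0"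
    by cases (auto simp: rb_neg2 rb0 odd_ne0)
qed

lemma of_nat_mult_nth: "(of_nat k * (p :: real fps)) $ a = of_nat k * p $ a"
  by (simp flip: fps_of_nat)

lemma deriv_F: "fps_deriv (A2 fc) = A2 fdc"
proof (rule fps_ext)
  fix n
  show "fps_deriv (A2 fc) $ n = A2 fdc $ n"
    by (rule fps_ext) (simp only: fps_deriv_nth of_nat_mult_nth A2_nth, simp add: fdc_def add.commute)
qed

lemma Dl_deriv: "fps_deriv Dl = - fps_const (2 * (1 + fps_X)) + 2 * (fps_const ((1 - fps_X)^2) * fps_X)"
  unfolding Dl_def by (simp add: fps_deriv_power algebra_simps numeral_fps_const)

lemma Dld_coeff:
  assumes "vz f"
  shows "(fps_deriv Dl * A2 f) $ n $ a = -2 * f (int n) (int a) - 2 * f (int n) (int a - 1)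
     + 2 * f (int n - 1) (int a) - 4 * f (int n - 1) (int a - 1) + 2 * f (int n - 1) (int a - 2)"
proof -
  have e: "fps_deriv Dl * A2 f = - (fps_const (2 * (1 + fps_X)) * A2 f)
       + 2 * (fps_const ((1 - fps_X)^2) * (fps_X * A2 f))"
    unfolding Dl_deriv by (simp only: distrib_right minus_mult_left mult.assoc)
  have "(fps_deriv Dl * A2 f) $ n = - (2 * ((1 + fps_X) * A2 f $ n))
      + 2 * ((1 - fps_X)^2 * (if n = 0 then 0 else A2 f $ (n - 1)))"
    unfolding e by (simp add: numeral_mult_nth)
  also have "\<dots> = - (2 * ((1 + fps_X) * Abs_fps (\<lambda>a. f (int n) (int a))))
      + 2 * ((1 - fps_X)^2 * Abs_fps (\<lambda>a. f (int n - 1) (int a)))"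
    by (simp only: sh1[OF assms]) (simp add: A2_def)
  finally have *: "(fps_deriv Dl * A2 f) $ n = \<dots>" .
  have v0: "f (int n) j = 0" if "j < 0" for j using assms that unfolding vz_def by auto
  have v1: "f (int n - 1) j = 0" if "j < 0" for j using assms that unfolding vz_def by auto
  show ?thesis unfolding * fps_add_nth fps_neg_nth numeral_mult_nth in1 in2
    using ish1[of "\<lambda>j. f (int n) j", OF v0, of a] ish2[of "\<lambda>j. f (int n - 1) j", OF v1, of a]
      ish1[of "\<lambda>j. f (int n - 1) j", OF v1, of a]
    by simp
qed

definition xX2 :: "real fps fps" where "xX2 = fps_const fps_X * fps_X^2"

lemma xX2_coeff:
  assumes "vz f"
  shows "(xX2 * A2 f) $ n $ a = f (int n - 2) (int a - 1)"
proof -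
  have "(xX2 * A2 f) $ n = fps_X * (if n < 2 then 0 else A2 f $ (n - 2))"
    unfolding xX2_def by (simp add: mult.assoc fps_X_power_mult_nth)
  also have "\<dots> = fps_X * Abs_fps (\<lambda>a. f (int n - 2) (int a))"
    by (simp only: sh2[OF assms])
  finally have *: "(xX2 * A2 f) $ n = \<dots>" .
  have v2: "f (int n - 2) j = 0" if "j < 0" for j using assms that unfolding vz_def by auto
  show ?thesis unfolding * fps_X_mult_nth using ish1[of "\<lambda>j. f (int n - 2) j", OF v2, of a] by simp
qed

lemma ODE: "2 * (Dl * fps_deriv (A2 fc)) + fps_deriv Dl * A2 fc = 0"
proof (rule fps_ext)
  fix n show "(2 * (Dl * fps_deriv (A2 fc)) + fps_deriv Dl * A2 fc) $ n = 0 $ n"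
  proof (rule fps_ext)
    fix a
    show "(2 * (Dl * fps_deriv (A2 fc)) + fps_deriv Dl * A2 fc) $ n $ a = 0 $ n $ a"
      unfolding fps_add_nth numeral_mult_nth deriv_F Dl_coeff[OF vz_fdc] Dld_coeff[OF vz_fc]
      using ode_id[of "int n" "int a"] by simp
  qed
qed

lemma FFD: "A2 fc * A2 fc * Dl = 1"
proof -
  have "fps_deriv (A2 fc * A2 fc * Dl) = A2 fc * (2 * (Dl * fps_deriv (A2 fc)) + fps_deriv Dl * A2 fc)"
    by (simp add: algebra_simps)
  then have "fps_deriv (A2 fc * A2 fc * Dl) = 0" by (simp only: ODE mult_zero_right)
  then have "A2 fc * A2 fc * Dl = fps_const ((A2 fc * A2 fc * Dl) $ 0)" by (simp only: fps_deriv_eq_0_iff)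
  moreover have "(A2 fc * A2 fc * Dl) $ 0 = 1"
  proof -
    have "A2 fc $ 0 = 1" by (rule fps_ext) (simp add: fc_def rb0)
    moreover have "Dl $ 0 = 1" unfolding Dl_def by (simp add: fps_X_power_mult_nth)
    ultimately show ?thesis by (simp add: fps_mult_nth)
  qed
  ultimately show ?thesis by simp
qed

lemma SD: "A2 fs * Dl = xX2 * A2 fc"
proof (rule fps_ext)
  fix n show "(A2 fs * Dl) $ n = (xX2 * A2 fc) $ n"
  proof (rule fps_ext)
    fix a show "(A2 fs * Dl) $ n $ a = (xX2 * A2 fc) $ n $ a"
      unfolding mult.commute[of "A2 fs"] Dl_coeff[OF vz_fs] xX2_coeff[OF vz_fc]
      using s_id[of "int n" "int a"] by simp
  qed
qed

lemma ED: "A2 fe * Dl = 1"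
proof (rule fps_ext)
  fix n show "(A2 fe * Dl) $ n = 1 $ n"
  proof (rule fps_ext)
    fix a show "(A2 fe * Dl) $ n $ a = 1 $ n $ a"
      unfolding mult.commute[of "A2 fe"] Dl_coeff[OF vz_fe]
      using fe_id[of "int n" "int a"] by simp
  qed
qed

lemma VD: "A2 fv * Dl = xX2 * A2 fe"
proof (rule fps_ext)
  fix n show "(A2 fv * Dl) $ n = (xX2 * A2 fe) $ n"
  proof (rule fps_ext)
    fix a show "(A2 fv * Dl) $ n $ a = (xX2 * A2 fe) $ n $ a"
      unfolding mult.commute[of "A2 fv"] Dl_coeff[OF vz_fv] xX2_coeff[OF vz_fe]
      using v_id[of "int n" "int a"] by simp
  qed
qed

lemma T_eq_V: "A2 fs * A2 fc = A2 fv"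
proof -
  have Dl0: "Dl \<noteq> 0"
  proof
    assume "Dl = 0"
    then have "Dl $ 0 = 0" by simp
    moreover have "Dl $ 0 = 1" unfolding Dl_def by (simp add: fps_X_power_mult_nth)
    ultimately show False by simp
  qed
  have "A2 fs * A2 fc * (Dl * Dl) = xX2 * (A2 fc * A2 fc * Dl)"
    using SD by (simp add: algebra_simps)
  also have "\<dots> = xX2" by (simp add: FFD)
  also have "xX2 = A2 fv * (Dl * Dl)"
    using VD ED by (simp add: algebra_simps)
  finally have "A2 fs * A2 fc * (Dl * Dl) = A2 fv * (Dl * Dl)" .
  then show ?thesis using Dl0 by simp
qed


definition sd :: "'a set \<Rightarrow> 'a set \<Rightarrow> 'a set" where "sd I J = (I - J) \<union> (J - I)"

abbreviation OI :: "nat \<Rightarrow> nat \<Rightarrow> (nat \<times> nat) set set" where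
  "OI m k \<equiv> order_ideals prod_le (chain m \<times> chain k)"

lemma OI_sub: "I \<in> OI m k \<Longrightarrow> I \<subseteq> chain m \<times> chain k"
  unfolding order_ideals_def by auto

lemma OI_fin: "I \<in> OI m k \<Longrightarrow> finite I"
  using OI_sub[of I m k] unfolding chain_def by (auto intro: finite_subset)

lemma OI_down: "I \<in> OI m k \<Longrightarrow> x \<in> I \<Longrightarrow> y \<in> chain m \<times> chain k \<Longrightarrow> prod_le y x \<Longrightarrow> y \<in> I"
  unfolding order_ideals_def by auto

lemma lt_sum: "prod_le y x \<Longrightarrow> y \<noteq> x \<Longrightarrow> fst y + snd y < fst x + snd x"
  unfolding prod_le_def by (cases x; cases y) auto

abbreviation ssum :: "nat \<times> nat \<Rightarrow> nat" where "ssum z \<equiv> fst z + snd z"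

lemma add_min:
  assumes I: "I \<in> OI m k" and J: "J \<in> OI m k" and z: "z \<in> J - I"
    and mn: "\<forall>y\<in>J - I. ssum z \<le> ssum y"
  shows "insert z I \<in> OI m k"
proof -
  have zB: "z \<in> chain m \<times> chain k" using z OI_sub[OF J] by auto
  show ?thesis unfolding order_ideals_def
  proof (intro CollectI conjI ballI impI)
    show "insert z I \<subseteq> chain m \<times> chain k" using zB OI_sub[OF I] by auto
  next
    fix x y assume x: "x \<in> insert z I" and y: "y \<in> chain m \<times> chain k" and le: "prod_le y x"
    show "y \<in> insert z I"
    proof (cases "x = z")
      case True
      have yJ: "y \<in> J" using OI_down[OF J _ y le] z True by auto
      show ?thesis
      proof (rule ccontr)
        assume "y \<notin> insert z I"
        then have "y \<in> J - I" "y \<noteq> z" using yJ by auto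
        then have "ssum z \<le> ssum y" "ssum y < ssum z" using mn lt_sum[OF le] True by auto
        then show False by simp
      qed
    next
      case False
      then show ?thesis using OI_down[OF I _ y le] x by auto
    qed
  qed
qed

lemma rem_max:
  assumes I: "I \<in> OI m k" and J: "J \<in> OI m k" and z: "z \<in> I - J"
    and mx: "\<forall>y\<in>I - J. ssum y \<le> ssum z"
  shows "I - {z} \<in> OI m k"
  unfolding order_ideals_def
proof (intro CollectI conjI ballI impI)
  show "I - {z} \<subseteq> chain m \<times> chain k" using OI_sub[OF I] by auto
next
  fix x y assume x: "x \<in> I - {z}" and y: "y \<in> chain m \<times> chain k" and le: "prod_le y x"
  have yI: "y \<in> I" using OI_down[OF I _ y le] x by auto
  show "y \<in> I - {z}"
  proof (rule ccontr)
    assume "y \<notin> I - {z}"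
    then have yz: "y = z" using yI by auto
    have xB: "x \<in> chain m \<times> chain k" using x OI_sub[OF I] by auto
    have "x \<notin> J"
    proof
      assume "x \<in> J"
      then have "z \<in> J" using OI_down[OF J _ y le] yz by auto
      then show False using z by auto
    qed
    then have "x \<in> I - J" using x by auto
    then have "ssum x \<le> ssum z" using mx by auto
    moreover have "ssum z < ssum x" using lt_sum[OF le] yz x by auto
    ultimately show False by simp
  qed
qed

lemma ex_min: "A \<noteq> {} \<Longrightarrow> \<exists>z\<in>A. \<forall>y\<in>A. ssum z \<le> ssum y"
  using ex_has_least_nat[of "\<lambda>z. z \<in> A" _ ssum] by blast

lemma ex_max: "finite A \<Longrightarrow> A \<noteq> {} \<Longrightarrow> \<exists>z\<in>A. \<forall>y\<in>A. ssum y \<le> ssum z"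
proof -
  assume "finite A" "A \<noteq> {}"
  then have "Max (ssum ` A) \<in> ssum ` A" by simp
  then obtain z where z: "z \<in> A" "ssum z = Max (ssum ` A)" by auto
  have "\<forall>y\<in>A. ssum y \<le> ssum z" using z \<open>finite A\<close> by auto
  then show ?thesis using z by blast
qed

lemma covers_card:
  assumes c: "covers (OI m k) (\<subseteq>) X Y"
  shows "card (Y - X) = 1"
proof -
  have X: "X \<in> OI m k" and Y: "Y \<in> OI m k" and sub: "X \<subseteq> Y" and ne: "X \<noteq> Y"
    and nz: "\<not> (\<exists>Z\<in>OI m k. X \<subseteq> Z \<and> Z \<subseteq> Y \<and> Z \<noteq> X \<and> Z \<noteq> Y)"
    using c unfolding covers_def by auto
  have fin: "finite (Y - X)" using OI_fin[OF Y] by auto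
  have nem: "Y - X \<noteq> {}" using sub ne by auto
  obtain z where z: "z \<in> Y - X" and mn: "\<forall>y\<in>Y - X. ssum z \<le> ssum y" using ex_min[OF nem] by blast
  have Z: "insert z X \<in> OI m k" by (rule add_min[OF X Y z mn])
  have s1: "X \<subseteq> insert z X" "insert z X \<subseteq> Y" "insert z X \<noteq> X" using z sub by auto
  have "insert z X = Y"
    using nz Z s1 by blast
  then have "Y - X = {z}" using z by auto
  then show ?thesis by simp
qed

lemma edge_card:
  assumes "(X, Y) \<in> hasse_edges (OI m k) (\<subseteq>)"
  shows "X \<in> OI m k \<and> Y \<in> OI m k \<and> card (sd X Y) = 1"
proof -
  have "covers (OI m k) (\<subseteq>) X Y \<or> covers (OI m k) (\<subseteq>) Y X"
    using assms unfolding hasse_edges_def by auto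
  then show ?thesis
  proof
    assume c: "covers (OI m k) (\<subseteq>) X Y"
    then have "sd X Y = Y - X" unfolding covers_def sd_def by auto
    then show ?thesis using covers_card[OF c] c unfolding covers_def by auto
  next
    assume c: "covers (OI m k) (\<subseteq>) Y X"
    then have "sd X Y = X - Y" unfolding covers_def sd_def by auto
    then show ?thesis using covers_card[OF c] c unfolding covers_def by auto
  qed
qed

lemma sd_tri: "finite A \<Longrightarrow> finite B \<Longrightarrow> finite C \<Longrightarrow> card (sd A C) \<le> card (sd A B) + card (sd B C)"
proof -
  assume f: "finite A" "finite B" "finite C"
  have "sd A C \<subseteq> sd A B \<union> sd B C" unfolding sd_def by auto
  moreover have "finite (sd A B)" "finite (sd B C)" using f unfolding sd_def by auto
  ultimately have "card (sd A C) \<le> card (sd A B \<union> sd B C)" by (intro card_mono) auto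
  also have "\<dots> \<le> card (sd A B) + card (sd B C)" by (rule card_Un_le)
  finally show ?thesis .
qed

lemma walk_lower:
  "(I, J) \<in> (hasse_edges (OI m k) (\<subseteq>)) ^^ n \<Longrightarrow> I \<in> OI m k \<Longrightarrow> card (sd I J) \<le> n"
proof (induction n arbitrary: J)
  case 0
  then show ?case by (simp add: sd_def)
next
  case (Suc n)
  then obtain Z where Z: "(I, Z) \<in> (hasse_edges (OI m k) (\<subseteq>)) ^^ n" "(Z, J) \<in> hasse_edges (OI m k) (\<subseteq>)"
    by auto
  have e: "Z \<in> OI m k" "J \<in> OI m k" "card (sd Z J) = 1" using edge_card[OF Z(2)] by auto
  have "card (sd I J) \<le> card (sd I Z) + card (sd Z J)"
    by (rule sd_tri) (use OI_fin e Suc.prems in auto)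
  also have "\<dots> \<le> n + 1" using Suc.IH[OF Z(1) Suc.prems(2)] e by simp
  finally show ?case by simp
qed

lemma walk_upper:
  "I \<in> OI m k \<Longrightarrow> J \<in> OI m k \<Longrightarrow> card (sd I J) = d \<Longrightarrow> (I, J) \<in> (hasse_edges (OI m k) (\<subseteq>)) ^^ d"
proof (induction d arbitrary: I)
  case 0
  have "sd I J = {}" using 0 OI_fin unfolding sd_def by auto
  then have "I = J" unfolding sd_def by auto
  then show ?case by simp
next
  case (Suc d)
  have finI: "finite I" and finJ: "finite J" using Suc.prems OI_fin by auto
  show ?case
  proof (cases "J - I = {}")
    case False
    obtain z where z: "z \<in> J - I" and mn: "\<forall>y\<in>J - I. ssum z \<le> ssum y" using ex_min[OF False] by blast
    define I' where "I' = insert z I"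
    have I': "I' \<in> OI m k" unfolding I'_def by (rule add_min[OF Suc.prems(1,2) z mn])
    have cov: "covers (OI m k) (\<subseteq>) I I'"
      unfolding covers_def I'_def using Suc.prems(1) I' z by (auto simp: I'_def)
    have edge: "(I, I') \<in> hasse_edges (OI m k) (\<subseteq>)" unfolding hasse_edges_def using cov by auto
    have "sd I' J = sd I J - {z}" unfolding sd_def I'_def using z by auto
    then have "card (sd I' J) = d" using Suc.prems(3) z finI finJ unfolding sd_def by auto
    then have "(I', J) \<in> (hasse_edges (OI m k) (\<subseteq>)) ^^ d" using Suc.IH[OF I' Suc.prems(2)] by simp
    then show ?thesis by (rule relpow_Suc_I2[OF edge])
  next
    case True
    have ne: "I - J \<noteq> {}" using True Suc.prems(3) unfolding sd_def by auto
    obtain z where z: "z \<in> I - J" and mx: "\<forall>y\<in>I - J. ssum y \<le> ssum z"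
      using ex_max[OF _ ne] finI by auto
    define I' where "I' = I - {z}"
    have I': "I' \<in> OI m k" unfolding I'_def by (rule rem_max[OF Suc.prems(1,2) z mx])
    have cov: "covers (OI m k) (\<subseteq>) I' I"
      unfolding covers_def I'_def using Suc.prems(1) I' z by (auto simp: I'_def)
    have edge: "(I, I') \<in> hasse_edges (OI m k) (\<subseteq>)" unfolding hasse_edges_def using cov by auto
    have "sd I' J = sd I J - {z}" unfolding sd_def I'_def using z by auto
    then have "card (sd I' J) = d" using Suc.prems(3) z finI finJ unfolding sd_def by auto
    then have "(I', J) \<in> (hasse_edges (OI m k) (\<subseteq>)) ^^ d" using Suc.IH[OF I' Suc.prems(2)] by simp
    then show ?thesis by (rule relpow_Suc_I2[OF edge])
  qed
qed

lemma hasse_dist_eq: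
  assumes "I \<in> OI m k" "J \<in> OI m k"
  shows "hasse_dist (OI m k) (\<subseteq>) I J = card (sd I J)"
  unfolding hasse_dist_def
proof (rule Least_equality)
  show "(I, J) \<in> hasse_edges (OI m k) (\<subseteq>) ^^ card (sd I J)" using walk_upper[OF assms refl] .
next
  fix y assume "(I, J) \<in> hasse_edges (OI m k) (\<subseteq>) ^^ y"
  then show "card (sd I J) \<le> y" using walk_lower assms(1) by blast
qed


definition lam :: "(nat \<times> nat) set \<Rightarrow> nat \<Rightarrow> nat" where
  "lam I i = card {b. (i, b) \<in> I}"

lemma downset_interval:
  assumes fin: "finite R" and pos: "\<forall>b\<in>R. 1 \<le> b" and dn: "\<forall>b\<in>R. \<forall>b'. 1 \<le> b' \<and> b' \<le> b \<longrightarrow> b' \<in> R"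
  shows "R = {1..card R}"
proof (cases "R = {}")
  case True then show ?thesis by simp
next
  case False
  define M where "M = Max R"
  have MR: "M \<in> R" unfolding M_def using fin False by simp
  have "R = {1..M}"
  proof
    show "R \<subseteq> {1..M}" using pos fin unfolding M_def by auto
    show "{1..M} \<subseteq> R" using dn MR by auto
  qed
  then show ?thesis by simp
qed

lemma row_eq:
  assumes I: "I \<in> OI m k" and i: "i \<in> {1..m}"
  shows "{b. (i, b) \<in> I} = {1..lam I i}" and "lam I i \<le> k"
proof -
  have sub: "{b. (i, b) \<in> I} \<subseteq> {1..k}" using OI_sub[OF I] unfolding chain_def by auto
  have fin: "finite {b. (i, b) \<in> I}" using sub finite_subset by blast
  have dn: "\<forall>b\<in>{b. (i, b) \<in> I}. \<forall>b'. 1 \<le> b' \<and> b' \<le> b \<longrightarrow> b' \<in> {b. (i, b) \<in> I}"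
  proof (intro ballI allI impI)
    fix b b' assume b: "b \<in> {b. (i, b) \<in> I}" and b': "1 \<le> b' \<and> b' \<le> b"
    have "b \<le> k" using b sub by auto
    then have "(i, b') \<in> chain m \<times> chain k" using i b' unfolding chain_def by auto
    moreover have "prod_le (i, b') (i, b)" using b' unfolding prod_le_def by simp
    ultimately show "b' \<in> {b. (i, b) \<in> I}" using OI_down[OF I _ _ ] b by auto
  qed
  show e: "{b. (i, b) \<in> I} = {1..lam I i}"
    unfolding lam_def by (rule downset_interval[OF fin]) (use sub dn in auto)
  show "lam I i \<le> k"
  proof -
    have "card {b. (i, b) \<in> I} \<le> card {1..k}" by (rule card_mono[OF _ sub]) simp
    then show ?thesis unfolding lam_def by simp
  qed
qed

lemma mem_iff:
  assumes I: "I \<in> OI m k"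
  shows "(i, b) \<in> I \<longleftrightarrow> i \<in> {1..m} \<and> 1 \<le> b \<and> b \<le> lam I i"
proof
  assume "(i, b) \<in> I"
  moreover then have "i \<in> {1..m}" using OI_sub[OF I] unfolding chain_def by auto
  ultimately show "i \<in> {1..m} \<and> 1 \<le> b \<and> b \<le> lam I i" using row_eq(1)[OF I, of i] by auto
next
  assume "i \<in> {1..m} \<and> 1 \<le> b \<and> b \<le> lam I i"
  then show "(i, b) \<in> I" using row_eq(1)[OF I, of i] by auto
qed

lemma lam_mono:
  assumes I: "I \<in> OI m k" and "1 \<le> i" "i \<le> i'" "i' \<le> m"
  shows "lam I i' \<le> lam I i"
proof -
  have "{b. (i', b) \<in> I} \<subseteq> {b. (i, b) \<in> I}"
  proof
    fix b assume b: "b \<in> {b. (i', b) \<in> I}"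
    then have "(i, b) \<in> chain m \<times> chain k" using OI_sub[OF I] assms unfolding chain_def by auto
    moreover have "prod_le (i, b) (i', b)" using assms unfolding prod_le_def by simp
    ultimately show "b \<in> {b. (i, b) \<in> I}" using OI_down[OF I] b by auto
  qed
  moreover have "finite {b. (i, b) \<in> I}" using row_eq(1)[OF I, of i] assms by simp
  ultimately show ?thesis unfolding lam_def by (rule card_mono[rotated])
qed

lemma card_sd_rows:
  assumes I: "I \<in> OI m k" and J: "J \<in> OI m k"
  shows "real (card (sd I J)) = (\<Sum>i\<in>{1..m}. \<bar>real (lam I i) - real (lam J i)\<bar>)"
proof -
  have sub: "sd I J \<subseteq> chain m \<times> chain k" using OI_sub[OF I] OI_sub[OF J] unfolding sd_def by auto
  have eq: "sd I J = (SIGMA i:{1..m}. {b. (i, b) \<in> sd I J})" using sub unfolding chain_def by auto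
  have row: "{b. (i, b) \<in> sd I J} = sd {1..lam I i} {1..lam J i}" if "i \<in> {1..m}" for i
    using row_eq(1)[OF I that] row_eq(1)[OF J that] unfolding sd_def by auto
  have finr: "finite {b. (i, b) \<in> sd I J}" if "i \<in> {1..m}" for i
  proof -
    have "finite (sd {1..lam I i} {1..lam J i})" unfolding sd_def by simp
    then show ?thesis using row[OF that] by simp
  qed
  have cd: "real (card (sd {1..x} {1..y})) = \<bar>real x - real y\<bar>" for x y :: nat
  proof (cases "x \<le> y")
    case True
    then have "sd {1..x} {1..y} = {x+1..y}" unfolding sd_def by auto
    then show ?thesis using True by simp
  next
    case False
    then have "sd {1..x} {1..y} = {y+1..x}" unfolding sd_def by auto
    then show ?thesis using False by simp
  qed
  have "card (sd I J) = (\<Sum>i\<in>{1..m}. card {b. (i, b) \<in> sd I J})"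
    by (subst eq, rule card_SigmaI) (use finr in auto)
  then have "real (card (sd I J)) = (\<Sum>i\<in>{1..m}. real (card {b. (i, b) \<in> sd I J}))" by simp
  also have "\<dots> = (\<Sum>i\<in>{1..m}. \<bar>real (lam I i) - real (lam J i)\<bar>)"
  proof (intro sum.cong refl)
    fix i assume "i \<in> {1..m}"
    then show "real (card {b. (i, b) \<in> sd I J}) = \<bar>real (lam I i) - real (lam J i)\<bar>"
      by (simp only: row cd)
  qed
  finally show ?thesis .
qed


definition uu :: "nat \<Rightarrow> (nat \<times> nat) set \<Rightarrow> nat \<Rightarrow> nat" where
  "uu m I i = lam I i + (m + 1 - i)"

definition Phi :: "nat \<Rightarrow> (nat \<times> nat) set \<Rightarrow> nat set" where
  "Phi m I = uu m I ` {1..m}"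

lemma uu_dec:
  assumes I: "I \<in> OI m k" and "1 \<le> i" "i < i'" "i' \<le> m"
  shows "uu m I i' < uu m I i"
  using lam_mono[OF I, of i i'] assms unfolding uu_def by simp

lemma uu_le:
  assumes I: "I \<in> OI m k" and "1 \<le> i" "i \<le> i'" "i' \<le> m"
  shows "uu m I i' + (i' - i) \<le> uu m I i"
  using lam_mono[OF I, of i i'] assms unfolding uu_def by simp

lemma uu_range:
  assumes I: "I \<in> OI m k" and i: "i \<in> {1..m}"
  shows "1 \<le> uu m I i" "uu m I i \<le> m + k"
  using row_eq(2)[OF I i] i unfolding uu_def by auto

lemma inj_uu: "I \<in> OI m k \<Longrightarrow> inj_on (uu m I) {1..m}"
proof (rule inj_onI)
  fix i i' assume I: "I \<in> OI m k" and i: "i \<in> {1..m}" and i': "i' \<in> {1..m}" and e: "uu m I i = uu m I i'"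
  show "i = i'"
  proof (rule ccontr)
    assume "i \<noteq> i'"
    then have "i < i' \<or> i' < i" by auto
    then show False
    proof
      assume "i < i'" then show False using uu_dec[OF I, of i i'] i i' e by auto
    next
      assume "i' < i" then show False using uu_dec[OF I, of i' i] i i' e by auto
    qed
  qed
qed

lemma Phi_SS: "I \<in> OI m k \<Longrightarrow> Phi m I \<in> SS (m + k) m"
proof -
  assume I: "I \<in> OI m k"
  have "Phi m I \<subseteq> {1..m+k}" unfolding Phi_def using uu_range[OF I] by auto
  moreover have "card (Phi m I) = m" unfolding Phi_def using card_image[OF inj_uu[OF I]] by simp
  ultimately show ?thesis unfolding SS_def by simp
qed

lemma cnt_Phi:
  assumes I: "I \<in> OI m k"
  shows "cnt (Phi m I) t = card {i\<in>{1..m}. uu m I i \<le> t}"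
proof -
  have "{x \<in> Phi m I. x \<le> t} = uu m I ` {i\<in>{1..m}. uu m I i \<le> t}" unfolding Phi_def by auto
  moreover have "inj_on (uu m I) {i\<in>{1..m}. uu m I i \<le> t}" using inj_uu[OF I] by (rule inj_on_subset) auto
  ultimately show ?thesis unfolding cnt_def by (simp add: card_image)
qed

lemma abs_as_sum:
  fixes u v n :: nat
  assumes "u \<le> n" "v \<le> n"
  shows "\<bar>real u - real v\<bar> = (\<Sum>t\<le>n. \<bar>of_bool (u \<le> t) - of_bool (v \<le> t)\<bar>)"
proof -
  have "(\<Sum>t\<le>n. \<bar>of_bool (u \<le> t) - of_bool (v \<le> t) :: real\<bar>) = (\<Sum>t\<le>n. of_bool (t \<in> {min u v..<max u v}))"
    by (intro sum.cong refl) auto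
  also have "\<dots> = real (card ({..n} \<inter> {t. t \<in> {min u v..<max u v}}))"
    by simp
  also have "{..n} \<inter> {t. t \<in> {min u v..<max u v}} = {min u v..<max u v}" using assms by auto
  finally show ?thesis by (simp add: max_def min_def)
qed

lemma upclosed_comparable:
  fixes A B :: "nat set"
  assumes A: "\<And>i i'. i \<in> A \<Longrightarrow> i \<le> i' \<Longrightarrow> i' \<in> S \<Longrightarrow> i' \<in> A"
    and B: "\<And>i i'. i \<in> B \<Longrightarrow> i \<le> i' \<Longrightarrow> i' \<in> S \<Longrightarrow> i' \<in> B"
    and "A \<subseteq> S" "B \<subseteq> S"
  shows "A \<subseteq> B \<or> B \<subseteq> A"
proof (rule ccontr)
  assume "\<not> (A \<subseteq> B \<or> B \<subseteq> A)"
  then obtain x y where x: "x \<in> A" "x \<notin> B" and y: "y \<in> B" "y \<notin> A" by auto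
  show False
  proof (cases "x \<le> y")
    case True then show False using A[OF x(1) True] y assms(4) by auto
  next
    case False then show False using B[OF y(1), of x] x assms(3) by auto
  qed
qed

lemma sum_ind: "finite S \<Longrightarrow> B \<subseteq> S \<Longrightarrow> (\<Sum>i\<in>S. of_bool (i \<in> B) :: real) = real (card B)"
proof -
  assume "finite S" "B \<subseteq> S"
  moreover have "S \<inter> {i. i \<in> B} = B" using \<open>B \<subseteq> S\<close> by auto
  ultimately show ?thesis by simp
qed

lemma sum_abs_ind:
  fixes A B :: "nat set"
  assumes fin: "finite S" and sub: "A \<subseteq> S" "B \<subseteq> S" and cmp: "A \<subseteq> B \<or> B \<subseteq> A"
  shows "(\<Sum>i\<in>S. \<bar>of_bool (i \<in> A) - of_bool (i \<in> B)\<bar>) = \<bar>real (card A) - real (card B)\<bar>"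
  using cmp
proof
  assume AB: "A \<subseteq> B"
  have "(\<Sum>i\<in>S. \<bar>of_bool (i \<in> A) - of_bool (i \<in> B) :: real\<bar>) = (\<Sum>i\<in>S. of_bool (i \<in> B) - of_bool (i \<in> A))"
    using AB by (intro sum.cong refl) auto
  also have "\<dots> = real (card B) - real (card A)"
    using fin sub by (simp only: sum_subtractf sum_ind)
  also have "card A \<le> card B" using AB fin sub by (meson card_mono finite_subset)
  then have "real (card B) - real (card A) = \<bar>real (card A) - real (card B)\<bar>" by simp
  finally show ?thesis .
next
  assume AB: "B \<subseteq> A"
  have "(\<Sum>i\<in>S. \<bar>of_bool (i \<in> A) - of_bool (i \<in> B) :: real\<bar>) = (\<Sum>i\<in>S. of_bool (i \<in> A) - of_bool (i \<in> B))"
    using AB by (intro sum.cong refl) auto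
  also have "\<dots> = real (card A) - real (card B)"
    using fin sub by (simp only: sum_subtractf sum_ind)
  also have "card B \<le> card A" using AB fin sub by (meson card_mono finite_subset)
  then have "real (card A) - real (card B) = \<bar>real (card A) - real (card B)\<bar>" by simp
  finally show ?thesis .
qed

lemma L1:
  assumes I: "I \<in> OI m k" and J: "J \<in> OI m k"
  shows "(\<Sum>i\<in>{1..m}. \<bar>real (lam I i) - real (lam J i)\<bar>)
     = (\<Sum>t\<le>m+k. \<bar>real (cnt (Phi m I) t) - real (cnt (Phi m J) t)\<bar>)"
proof -
  let ?n = "m + k"
  have "(\<Sum>i\<in>{1..m}. \<bar>real (lam I i) - real (lam J i)\<bar>)
      = (\<Sum>i\<in>{1..m}. \<bar>real (uu m I i) - real (uu m J i)\<bar>)"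
    by (intro sum.cong refl) (auto simp: uu_def)
  also have "\<dots> = (\<Sum>i\<in>{1..m}. \<Sum>t\<le>?n. \<bar>of_bool (uu m I i \<le> t) - of_bool (uu m J i \<le> t)\<bar>)"
  proof (intro sum.cong refl)
    fix i assume i: "i \<in> {1..m}"
    show "\<bar>real (uu m I i) - real (uu m J i)\<bar> = (\<Sum>t\<le>?n. \<bar>of_bool (uu m I i \<le> t) - of_bool (uu m J i \<le> t)\<bar>)"
      by (rule abs_as_sum) (use uu_range[OF I i] uu_range[OF J i] in auto)
  qed
  also have "\<dots> = (\<Sum>t\<le>?n. \<Sum>i\<in>{1..m}. \<bar>of_bool (uu m I i \<le> t) - of_bool (uu m J i \<le> t)\<bar>)"
    by (rule sum.swap)
  also have "\<dots> = (\<Sum>t\<le>?n. \<bar>real (cnt (Phi m I) t) - real (cnt (Phi m J) t)\<bar>)"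
  proof (intro sum.cong refl)
    fix t
    let ?A = "{i\<in>{1..m}. uu m I i \<le> t}"
    let ?B = "{i\<in>{1..m}. uu m J i \<le> t}"
    have upA: "i' \<in> ?A" if "i \<in> ?A" "i \<le> i'" "i' \<in> {1..m}" for i i'
      using that uu_le[OF I, of i i'] by auto
    have upB: "i' \<in> ?B" if "i \<in> ?B" "i \<le> i'" "i' \<in> {1..m}" for i i'
      using that uu_le[OF J, of i i'] by auto
    have cmp: "?A \<subseteq> ?B \<or> ?B \<subseteq> ?A"
      by (rule upclosed_comparable[of _ "{1..m}"]) (use upA upB in auto)
    have "(\<Sum>i\<in>{1..m}. \<bar>of_bool (uu m I i \<le> t) - of_bool (uu m J i \<le> t) :: real\<bar>)
        = (\<Sum>i\<in>{1..m}. \<bar>of_bool (i \<in> ?A) - of_bool (i \<in> ?B)\<bar>)"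
      by (intro sum.cong refl) auto
    also have "\<dots> = \<bar>real (card ?A) - real (card ?B)\<bar>"
      by (rule sum_abs_ind[OF finite_atLeastAtMost _ _ cmp]) blast+
    finally show "(\<Sum>i\<in>{1..m}. \<bar>of_bool (uu m I i \<le> t) - of_bool (uu m J i \<le> t) :: real\<bar>)
        = \<bar>real (cnt (Phi m I) t) - real (cnt (Phi m J) t)\<bar>"
      by (simp add: cnt_Phi[OF I] cnt_Phi[OF J])
  qed
  finally show ?thesis .
qed

definition Lst :: "nat \<Rightarrow> (nat \<times> nat) set \<Rightarrow> nat list" where
  "Lst m I = map (\<lambda>j. uu m I (m - j)) [0..<m]"

lemma Lst_sorted:
  assumes I: "I \<in> OI m k"
  shows "sorted_list_of_set (Phi m I) = Lst m I"
proof -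
  have fin: "finite (Phi m I)" unfolding Phi_def by simp
  have s: "sorted_wrt (<) (Lst m I)"
    unfolding sorted_wrt_iff_nth_less
  proof (intro allI impI)
    fix j j' assume jj: "j < j'" "j' < length (Lst m I)"
    then have "j < j'" "j' < m" unfolding Lst_def by auto
    then have "uu m I (m - j) < uu m I (m - j')" using uu_dec[OF I, of "m - j'" "m - j"] by simp
    then show "Lst m I ! j < Lst m I ! j'" unfolding Lst_def using \<open>j < j'\<close> \<open>j' < m\<close> by simp
  qed
  have st: "set (Lst m I) = Phi m I"
  proof
    show "set (Lst m I) \<subseteq> Phi m I" unfolding Lst_def Phi_def by auto
    show "Phi m I \<subseteq> set (Lst m I)"
    proof
      fix x assume "x \<in> Phi m I"
      then obtain i where i: "i \<in> {1..m}" "x = uu m I i" unfolding Phi_def by auto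
      then have "m - i \<in> {0..<m}" "m - (m - i) = i" by auto
      then show "x \<in> set (Lst m I)" unfolding Lst_def set_map using i
        by (intro image_eqI[of _ _ "m - i"]) auto
    qed
  qed
  have l: "length (Lst m I) = card (Phi m I)"
    using Phi_SS[OF I] unfolding Lst_def SS_def by simp
  show ?thesis using sorted_list_of_set_unique[of "Phi m I" "Lst m I"] fin s st l by auto
qed


definition Psi :: "nat \<Rightarrow> nat \<Rightarrow> nat set \<Rightarrow> (nat \<times> nat) set" where
  "Psi m k U = {(i, b). i \<in> {1..m} \<and> b \<in> {1..k} \<and> b + (m + 1 - i) \<le> sorted_list_of_set U ! (m - i)}"

lemma Lst_nth: "i \<in> {1..m} \<Longrightarrow> Lst m I ! (m - i) = uu m I i"
  unfolding Lst_def by auto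

lemma Psi_Phi:
  assumes I: "I \<in> OI m k"
  shows "Psi m k (Phi m I) = I"
proof -
  have "(i, b) \<in> Psi m k (Phi m I) \<longleftrightarrow> (i, b) \<in> I" for i b
  proof (cases "i \<in> {1..m}")
    case True
    have "(i, b) \<in> Psi m k (Phi m I) \<longleftrightarrow> b \<in> {1..k} \<and> b + (m + 1 - i) \<le> Lst m I ! (m - i)"
      unfolding Psi_def Lst_sorted[OF I] using True by auto
    also have "\<dots> \<longleftrightarrow> b \<in> {1..k} \<and> b + (m + 1 - i) \<le> lam I i + (m + 1 - i)"
      unfolding Lst_nth[OF True] uu_def by simp
    also have "\<dots> \<longleftrightarrow> 1 \<le> b \<and> b \<le> lam I i" using row_eq(2)[OF I True] by auto
    also have "\<dots> \<longleftrightarrow> (i, b) \<in> I" using mem_iff[OF I] True by auto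
    finally show ?thesis .
  next
    case False
    then show ?thesis unfolding Psi_def using mem_iff[OF I] by auto
  qed
  then show ?thesis by auto
qed

context
  fixes m k :: nat and U :: "nat set"
  assumes U: "U \<in> SS (m + k) m"
begin

definition "xs = sorted_list_of_set U"

lemma U_sub: "U \<subseteq> {1..m+k}" and U_fin: "finite U" and U_card: "card U = m"
  using U unfolding SS_def by (auto intro: finite_subset)

lemma xs_len: "length xs = m" unfolding xs_def using U_card by simp
lemma xs_set: "set xs = U" unfolding xs_def using U_fin by simp
lemma xs_sorted: "sorted_wrt (<) xs" unfolding xs_def by (simp add: strict_sorted_list_of_set)

lemma xs_gap: "j + d < m \<Longrightarrow> xs ! j + d \<le> xs ! (j + d)"
proof (induction d)
  case 0 then show ?case by simp
next
  case (Suc d)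
  have "xs ! (j + d) < xs ! (j + Suc d)"
    using sorted_wrt_nth_less[OF xs_sorted, of "j + d" "j + Suc d"] Suc.prems xs_len by simp
  then show ?case using Suc by simp
qed

lemma xs_mem: "j < m \<Longrightarrow> xs ! j \<in> {1..m+k}"
  using xs_set xs_len U_sub nth_mem by blast

lemma xs_lo: "j < m \<Longrightarrow> j + 1 \<le> xs ! j"
  using xs_gap[of 0 j] xs_mem[of 0] by auto

lemma xs_hi: "j < m \<Longrightarrow> xs ! j + (m - 1 - j) \<le> m + k"
  using xs_gap[of j "m - 1 - j"] xs_mem[of "m - 1"] by auto

lemma Psi_row: "i \<in> {1..m} \<Longrightarrow> {b. (i, b) \<in> Psi m k U} = {1..xs ! (m - i) - (m + 1 - i)}"
proof -
  assume i: "i \<in> {1..m}"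
  have "xs ! (m - i) + (i - 1) \<le> m + k" using xs_hi[of "m - i"] i by auto
  then have le: "xs ! (m - i) - (m + 1 - i) \<le> k" using i by auto
  show ?thesis unfolding Psi_def xs_def[symmetric] using i le by auto
qed

lemma lam_Psi: "i \<in> {1..m} \<Longrightarrow> lam (Psi m k U) i = xs ! (m - i) - (m + 1 - i)"
  unfolding lam_def using Psi_row by simp

lemma uu_Psi: "i \<in> {1..m} \<Longrightarrow> uu m (Psi m k U) i = xs ! (m - i)"
  unfolding uu_def using lam_Psi xs_lo[of "m - i"] by auto

lemma Psi_OI: "Psi m k U \<in> OI m k"
  unfolding order_ideals_def
proof (intro CollectI conjI ballI impI)
  show "Psi m k U \<subseteq> chain m \<times> chain k" unfolding Psi_def chain_def by auto
next
  fix x y assume x: "x \<in> Psi m k U" and y: "y \<in> chain m \<times> chain k" and le: "prod_le y x"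
  obtain i b where xi: "x = (i, b)" by (cases x)
  obtain i' b' where yi: "y = (i', b')" by (cases y)
  have i: "i \<in> {1..m}" "b \<in> {1..k}" "b + (m + 1 - i) \<le> xs ! (m - i)"
    using x unfolding xi Psi_def xs_def by auto
  have i': "i' \<in> {1..m}" "b' \<in> {1..k}" using y unfolding yi chain_def by auto
  have lei: "i' \<le> i" "b' \<le> b" using le unfolding xi yi prod_le_def by auto
  have "xs ! (m - i) + (i - i') \<le> xs ! (m - i')"
    using xs_gap[of "m - i" "i - i'"] i i' lei by auto
  then have "b' + (m + 1 - i') \<le> xs ! (m - i')" using i i' lei by auto
  then show "y \<in> Psi m k U" unfolding yi Psi_def xs_def using i' by auto
qed

lemma Phi_Psi: "Phi m (Psi m k U) = U"
proof -
  have "Phi m (Psi m k U) = (\<lambda>i. xs ! (m - i)) ` {1..m}"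
    unfolding Phi_def using uu_Psi by auto
  also have "\<dots> = (\<lambda>j. xs ! j) ` {0..<m}"
  proof
    show "(\<lambda>i. xs ! (m - i)) ` {1..m} \<subseteq> (\<lambda>j. xs ! j) ` {0..<m}" by auto
    show "(\<lambda>j. xs ! j) ` {0..<m} \<subseteq> (\<lambda>i. xs ! (m - i)) ` {1..m}"
    proof
      fix x assume "x \<in> (\<lambda>j. xs ! j) ` {0..<m}"
      then obtain j where j: "j < m" "x = xs ! j" by auto
      then show "x \<in> (\<lambda>i. xs ! (m - i)) ` {1..m}" by (intro image_eqI[of _ _ "m - j"]) auto
    qed
  qed
  also have "\<dots> = set xs" using xs_len by (auto simp: in_set_conv_nth)
  finally show ?thesis using xs_set by simp
qed

end

lemma Phi_bij: "bij_betw (Phi m) (OI m k) (SS (m + k) m)"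
  by (rule bij_betw_byWitness[where f' = "Psi m k"])
     (auto simp: Psi_Phi Phi_Psi Phi_SS Psi_OI)

lemma sum_ideals:
  "(\<Sum>I\<in>OI m k. \<Sum>J\<in>OI m k. real (card (sd I J))) = G (\<lambda>x y. \<bar>real x - real y\<bar>) (m + k) m m"
proof -
  have "(\<Sum>I\<in>OI m k. \<Sum>J\<in>OI m k. real (card (sd I J)))
     = (\<Sum>I\<in>OI m k. \<Sum>J\<in>OI m k. \<Sum>t\<le>m+k. \<bar>real (cnt (Phi m I) t) - real (cnt (Phi m J) t)\<bar>)"
  proof (intro sum.cong refl)
    fix I J assume "I \<in> OI m k" "J \<in> OI m k"
    then show "real (card (sd I J)) = (\<Sum>t\<le>m+k. \<bar>real (cnt (Phi m I) t) - real (cnt (Phi m J) t)\<bar>)"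
      by (simp only: card_sd_rows L1)
  qed
  also have "\<dots> = (\<Sum>U\<in>SS (m+k) m. \<Sum>V\<in>SS (m+k) m. \<Sum>t\<le>m+k. \<bar>real (cnt U t) - real (cnt V t)\<bar>)"
    using sum.reindex_bij_betw[OF Phi_bij, of "\<lambda>U. \<Sum>V\<in>SS (m+k) m. \<Sum>t\<le>m+k. \<bar>real (cnt U t) - real (cnt V t)\<bar>"]
      sum.reindex_bij_betw[OF Phi_bij, of "\<lambda>V. \<Sum>t\<le>m+k. \<bar>real (cnt (Phi m _) t) - real (cnt V t)\<bar>"]
    by simp
  finally show ?thesis unfolding G_def .
qed


lemma G_abs_2K: "G (\<lambda>x y. \<bar>real x - real y\<bar>) n a a = 2 * K n a a"
proof -
  have "G (\<lambda>x y. \<bar>real x - real y\<bar>) n a a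
      = G (\<lambda>x y. max 0 (real x - real y) + max 0 (real y - real x)) n a a"
    unfolding G_def by (intro sum.cong refl) (simp add: max_def)
  also have "\<dots> = K n a a + G (\<lambda>x y. max 0 (real y - real x)) n a a"
    unfolding K_def by (rule G_add)
  also have "G (\<lambda>x y. max 0 (real y - real x)) n a a = K n a a"
    unfolding K_def by (rule G_swap[symmetric])
  finally show ?thesis by simp
qed

lemma P_fps: "P n a a = (A2 fs * A2 fc) $ n $ a"
proof -
  have "(A2 fs * A2 fc) $ n $ a = (\<Sum>i=0..n. (A2 fs $ i * A2 fc $ (n - i)) $ a)"
    by (simp add: fps_mult_nth fps_sum_nth)
  also have "\<dots> = (\<Sum>i=0..n. \<Sum>j=0..a. fs (int i) (int j) * fc (int (n - i)) (int (a - j)))"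
    by (intro sum.cong refl) (simp add: fps_mult_nth)
  also have "\<dots> = (\<Sum>i=0..n. \<Sum>j=0..a. fs (int i) (int j) * (real ((n - i) choose (a - j)) * real ((n - i) choose (a - j))))"
    by (intro sum.cong refl) (simp only: fc_def rb_nat)
  also have "\<dots> = P n a a"
    unfolding P_def atMost_atLeast0
    by (intro sum.cong refl) (simp add: mult.commute)
  finally show ?thesis by simp
qed

theorem corollary1p2:
  fixes m k :: nat
  shows "real (wiener (P_mk m k) (\<subseteq>)) =
    real (m * k) / real (4 * m + 4 * k + 2) * real ((2 * m + 2 * k + 2) choose (2 * k + 1))"
proof -
  let ?n = "m + k"
  have "real (wiener (P_mk m k) (\<subseteq>)) = (\<Sum>I\<in>OI m k. \<Sum>J\<in>OI m k. real (card (sd I J)))"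
    unfolding wiener_def P_mk_def of_nat_sum
    by (intro sum.cong refl) (simp add: hasse_dist_eq)
  also have "\<dots> = G (\<lambda>x y. \<bar>real x - real y\<bar>) ?n m m" by (rule sum_ideals)
  also have "\<dots> = 2 * K ?n m m" by (rule G_abs_2K)
  also have "K ?n m m = P ?n m m" by (rule K_eq_P) simp
  also have "P ?n m m = fv (int ?n) (int m)" unfolding P_fps T_eq_V by simp
  also have "fv (int ?n) (int m) = real m * real k / (8 * real ?n + 4) * real ((2 * ?n + 2) choose (2 * m + 1))"
  proof -
    have e1: "2 * int ?n + 2 = int (2 * ?n + 2)" "2 * int m + 1 = int (2 * m + 1)" by simp_all
    have "fv (int ?n) (int m) = real m * real k / (8 * real ?n + 4) * rb (2 * int ?n + 2) (2 * int m + 1)"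
      unfolding fv_def by simp
    also have "rb (2 * int ?n + 2) (2 * int m + 1) = real ((2 * ?n + 2) choose (2 * m + 1))"
      unfolding e1 by (rule rb_nat)
    finally show ?thesis .
  qed
  also have "((2 * ?n + 2) choose (2 * m + 1)) = ((2 * m + 2 * k + 2) choose (2 * k + 1))"
  proof -
    have "2 * m + 1 \<le> 2 * ?n + 2" by simp
    then have "((2 * ?n + 2) choose (2 * m + 1)) = ((2 * ?n + 2) choose (2 * ?n + 2 - (2 * m + 1)))"
      by (rule binomial_symmetric)
    also have "2 * ?n + 2 - (2 * m + 1) = 2 * k + 1" by simp
    finally show ?thesis by (simp add: algebra_simps)
  qed
  finally show ?thesis by (simp add: field_simps)
qed


end
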